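(* Let $m,n$ be positive integers with at least one of $m,n$ greater than $1$. The pseudograph $\mathcal{K}_{m,n}$ admits a cylindrical knight's tour if and only if neither of the following holds: (i) $m=2$ and $n=2$; (ii) $m$ is odd and $n$ is even.
   Context: Let $\mathcal{P}$ be the graph with vertex set $\mathbb{Z}^2$ in which $(a,b)$ and $(a',b')$ are adjacent iff $\{|a-a'|,|b-b'|\}=\{1,2\}$. For positive integers $m,n$ let $G$ be the group of automorphisms of $\mathcal{P}$ generated by $\tau(a,b)=(a+m,b)$ and $\sigma(a,b)=(m-1-a,\,b+n)$; it acts freely, and the knight's pseudograph of the $m\times n$ Klein bottle board is $\mathcal{K}_{m,n}=\mathcal{P}/G$ (vertices and edges are orbits; multiple edges and loops may occur), with covering map $\phi_K:\mathcal{P}\to\mathcal{K}_{m,n}$. A knight's tour is a closed walk visiting every vertex exactly once apart from the repeated start/end vertex (a Hamiltonian cycle). Regard a tour as a closed walk starting and ending at vertex $(0,0)$; it lifts uniquely to a walk in $\mathcal{P}$ starting at $(0,0)$. The tour is cylindrical if this lift ends at $(m,0)$ or $(-m,0)$ (equivalently, its homotopy class is the image of a generator of the fundamental group of the cylinder obtained by identifying only the left and right sides of the board). *)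

theory Defs
  imports Main
begin

definition knight_adj :: "int \<times> int \<Rightarrow> int \<times> int \<Rightarrow> bool" where
  "knight_adj p q \<longleftrightarrow> {\<bar>fst p - fst q\<bar>, \<bar>snd p - snd q\<bar>} = {1, 2}"

definition kb_tau :: "int \<Rightarrow> int \<times> int \<Rightarrow> int \<times> int" where
  "kb_tau m = (\<lambda>(a, b). (a + m, b))"
definition kb_tau_inv :: "int \<Rightarrow> int \<times> int \<Rightarrow> int \<times> int" where
  "kb_tau_inv m = (\<lambda>(a, b). (a - m, b))"
definition kb_sigma :: "int \<Rightarrow> int \<Rightarrow> int \<times> int \<Rightarrow> int \<times> int" where
  "kb_sigma m n = (\<lambda>(a, b). (m - 1 - a, b + n))"
definition kb_sigma_inv :: "int \<Rightarrow> int \<Rightarrow> int \<times> int \<Rightarrow> int \<times> int" where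
  "kb_sigma_inv m n = (\<lambda>(a, b). (m - 1 - a, b - n))"

inductive_set kbG :: "int \<Rightarrow> int \<Rightarrow> (int \<times> int \<Rightarrow> int \<times> int) set" for m n where
  kbG_id: "id \<in> kbG m n"
| kbG_tau: "g \<in> kbG m n \<Longrightarrow> kb_tau m \<circ> g \<in> kbG m n"
| kbG_tau_inv: "g \<in> kbG m n \<Longrightarrow> kb_tau_inv m \<circ> g \<in> kbG m n"
| kbG_sigma: "g \<in> kbG m n \<Longrightarrow> kb_sigma m n \<circ> g \<in> kbG m n"
| kbG_sigma_inv: "g \<in> kbG m n \<Longrightarrow> kb_sigma_inv m n \<circ> g \<in> kbG m n"

text \<open>Vertices of K_{m,n}: two lattice points represent the same vertex iff same G-orbit.\<close>
definition kb_same_vertex :: "int \<Rightarrow> int \<Rightarrow> int \<times> int \<Rightarrow> int \<times> int \<Rightarrow> bool" where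
  "kb_same_vertex m n p q \<longleftrightarrow> (\<exists>g \<in> kbG m n. g p = q)"

text \<open>Edges of K_{m,n}: the P-edges {p,p'} and {q,q'} represent the same edge iff same G-orbit.\<close>
definition kb_same_edge :: "int \<Rightarrow> int \<Rightarrow> (int \<times> int) \<times> (int \<times> int) \<Rightarrow> (int \<times> int) \<times> (int \<times> int) \<Rightarrow> bool" where
  "kb_same_edge m n e f \<longleftrightarrow> (\<exists>g \<in> kbG m n. {g (fst e), g (snd e)} = {fst f, snd f})"

text \<open>A knight's tour (Hamiltonian cycle) of K_{m,n}, regarded as a closed walk of length N
  starting and ending at the vertex of (0,0), given by its unique lift p(0),...,p(N) to P
  starting at (0,0): consecutive lift points are knight-adjacent, the walk is closed in the
  quotient, it visits every vertex exactly once (apart from the repeated start/end vertex),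
  and it uses no edge of K_{m,n} twice.\<close>
definition kb_knight_tour :: "int \<Rightarrow> int \<Rightarrow> (nat \<Rightarrow> int \<times> int) \<Rightarrow> nat \<Rightarrow> bool" where
  "kb_knight_tour m n p N \<longleftrightarrow>
     p 0 = (0, 0) \<and>
     (\<forall>i<N. knight_adj (p i) (p (Suc i))) \<and>
     kb_same_vertex m n (p 0) (p N) \<and>
     (\<forall>i<N. \<forall>j<N. i \<noteq> j \<longrightarrow> \<not> kb_same_vertex m n (p i) (p j)) \<and>
     (\<forall>q. \<exists>i<N. kb_same_vertex m n q (p i)) \<and>
     (\<forall>i<N. \<forall>j<N. i \<noteq> j \<longrightarrow>
        \<not> kb_same_edge m n (p i, p (Suc i)) (p j, p (Suc j)))"

definition kb_cylindrical_tour :: "int \<Rightarrow> int \<Rightarrow> (nat \<Rightarrow> int \<times> int) \<Rightarrow> nat \<Rightarrow> bool" where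
  "kb_cylindrical_tour m n p N \<longleftrightarrow>
     kb_knight_tour m n p N \<and> (p N = (m, 0) \<or> p N = (-m, 0))"

end

theory Submission
  imports Defs
begin


definition kc :: "int \<Rightarrow> int \<Rightarrow> int \<times> int \<Rightarrow> int \<times> int" where
  "kc m n p = ((if even (snd p div n) then fst p else m - 1 - fst p) mod m, snd p mod n)"

definition krel :: "int \<Rightarrow> int \<Rightarrow> int \<times> int \<Rightarrow> int \<times> int \<Rightarrow> bool" where
  "krel m n p q \<longleftrightarrow> (\<exists>k. snd q = snd p + k * n \<and>
      m dvd (fst q - (if even k then fst p else m - 1 - fst p)))"

lemma kbG_form:
  assumes "g \<in> kbG m n"
  shows "\<exists>k c. (\<forall>a b. g (a, b) = (if even k then a + c else c - a, b + k * n)) \<and>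
     m dvd (c - (if even k then 0 else m - 1))"
  using assms
proof induction
  case kbG_id
  show ?case by (rule exI[of _ 0], rule exI[of _ 0]) simp
next
  case (kbG_tau g)
  then obtain k c where g: "\<forall>a b. g (a, b) = (if even k then a + c else c - a, b + k * n)"
    and d: "m dvd (c - (if even k then 0 else m - 1))" by blast
  show ?case
  proof (rule exI[of _ k], rule exI[of _ "c + m"], intro conjI allI)
    fix a b show "(kb_tau m \<circ> g) (a, b) = (if even k then a + (c + m) else c + m - a, b + k * n)"
      using g by (simp add: kb_tau_def)
    have "c + m - (if even k then 0 else m - 1) = (c - (if even k then 0 else m - 1)) + m" by simp
    then show "m dvd (c + m - (if even k then 0 else m - 1))" using d by (metis dvd_add dvd_refl)
  qed
next
  case (kbG_tau_inv g)
  then obtain k c where g: "\<forall>a b. g (a, b) = (if even k then a + c else c - a, b + k * n)"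
    and d: "m dvd (c - (if even k then 0 else m - 1))" by blast
  show ?case
  proof (rule exI[of _ k], rule exI[of _ "c - m"], intro conjI allI)
    fix a b show "(kb_tau_inv m \<circ> g) (a, b) = (if even k then a + (c - m) else c - m - a, b + k * n)"
      using g by (simp add: kb_tau_inv_def)
    have "c - m - (if even k then 0 else m - 1) = (c - (if even k then 0 else m - 1)) - m" by simp
    then show "m dvd (c - m - (if even k then 0 else m - 1))" using d by (metis dvd_diff dvd_refl)
  qed
next
  case (kbG_sigma g)
  then obtain k c where g: "\<forall>a b. g (a, b) = (if even k then a + c else c - a, b + k * n)"
    and d: "m dvd (c - (if even k then 0 else m - 1))" by blast
  show ?case
  proof (rule exI[of _ "k + 1"], rule exI[of _ "m - 1 - c"], intro conjI allI)
    fix a b show "(kb_sigma m n \<circ> g) (a, b) = (if even (k+1) then a + (m - 1 - c) else (m - 1 - c) - a, b + (k+1) * n)"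
      using g by (auto simp add: kb_sigma_def algebra_simps)
    have "m - 1 - c - (if even (k+1) then 0 else m - 1) = - (c - (if even k then 0 else m - 1)) + (if even k then m - 1 else 0) - (if even (k+1) then 0 else m - 1)" by auto
    also have "\<dots> = - (c - (if even k then 0 else m - 1))" by auto
    finally show "m dvd (m - 1 - c - (if even (k+1) then 0 else m - 1))" using d by (metis dvd_minus_iff)
  qed
next
  case (kbG_sigma_inv g)
  then obtain k c where g: "\<forall>a b. g (a, b) = (if even k then a + c else c - a, b + k * n)"
    and d: "m dvd (c - (if even k then 0 else m - 1))" by blast
  show ?case
  proof (rule exI[of _ "k - 1"], rule exI[of _ "m - 1 - c"], intro conjI allI)
    fix a b show "(kb_sigma_inv m n \<circ> g) (a, b) = (if even (k-1) then a + (m - 1 - c) else (m - 1 - c) - a, b + (k-1) * n)"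
      using g by (auto simp add: kb_sigma_inv_def algebra_simps)
    have "m - 1 - c - (if even (k-1) then 0 else m - 1) = - (c - (if even k then 0 else m - 1)) + (if even k then m - 1 else 0) - (if even (k-1) then 0 else m - 1)" by auto
    also have "\<dots> = - (c - (if even k then 0 else m - 1))" by auto
    finally show "m dvd (m - 1 - c - (if even (k-1) then 0 else m - 1))" using d by (metis dvd_minus_iff)
  qed
qed

lemma sv_krel:
  assumes "kb_same_vertex m n p q" shows "krel m n p q"
proof -
  obtain g where g: "g \<in> kbG m n" "g p = q" using assms unfolding kb_same_vertex_def by blast
  obtain k c where f: "\<forall>a b. g (a, b) = (if even k then a + c else c - a, b + k * n)"
     and d: "m dvd (c - (if even k then 0 else m - 1))" using kbG_form[OF g(1)] by blast
  obtain a b where p: "p = (a, b)" by (cases p)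
  have q: "q = (if even k then a + c else c - a, b + k * n)" using f g(2) p by simp
  have "m dvd (fst q - (if even k then fst p else m - 1 - fst p))"
  proof (cases "even k")
    case True
    have e: "fst q - (if even k then fst p else m - 1 - fst p) = c" using True by (simp add: q p)
    have "m dvd c" using d True by simp
    then show ?thesis by (simp only: e)
  next
    case False
    have e: "fst q - (if even k then fst p else m - 1 - fst p) = c - (m - 1)" using False by (simp add: q p)
    have "m dvd c - (m - 1)" using d False by simp
    then show ?thesis by (simp only: e)
  qed
  moreover have "snd q = snd p + k * n" by (simp add: q p)
  ultimately show ?thesis unfolding krel_def by blast
qed

lemma kbG_gens: "kb_tau m \<in> kbG m n" "kb_tau_inv m \<in> kbG m n"
     "kb_sigma m n \<in> kbG m n" "kb_sigma_inv m n \<in> kbG m n"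
  using kbG.kbG_tau[OF kbG.kbG_id] kbG.kbG_tau_inv[OF kbG.kbG_id]
    kbG.kbG_sigma[OF kbG.kbG_id] kbG.kbG_sigma_inv[OF kbG.kbG_id] by simp_all

lemma kb_inv_simps[simp]:
  "kb_tau_inv m (kb_tau m y) = y" "kb_tau m (kb_tau_inv m y) = y"
  "kb_sigma_inv m n (kb_sigma m n y) = y" "kb_sigma m n (kb_sigma_inv m n y) = y"
  by (cases y; simp add: kb_tau_def kb_tau_inv_def kb_sigma_def kb_sigma_inv_def)+

lemma kbG_comp: "g \<in> kbG m n \<Longrightarrow> h \<in> kbG m n \<Longrightarrow> g \<circ> h \<in> kbG m n"
  by (induction rule: kbG.induct) (auto simp: comp_assoc intro: kbG.intros)

lemma kbG_inv: "g \<in> kbG m n \<Longrightarrow> \<exists>h \<in> kbG m n. \<forall>x. h (g x) = x"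
proof (induction rule: kbG.induct)
  case kbG_id
  show ?case by (rule bexI[of _ id]) (auto intro: kbG.kbG_id)
next
  case (kbG_tau g)
  then obtain h where h: "h \<in> kbG m n" "\<forall>x. h (g x) = x" by blast
  have "h \<circ> (kb_tau_inv m \<circ> id) \<in> kbG m n" using kbG_comp[OF h(1)] kbG_gens by simp
  moreover have "\<forall>x. (h \<circ> (kb_tau_inv m \<circ> id)) ((kb_tau m \<circ> g) x) = x"
    using h(2) by simp
  ultimately show ?case by blast
next
  case (kbG_tau_inv g)
  then obtain h where h: "h \<in> kbG m n" "\<forall>x. h (g x) = x" by blast
  have "h \<circ> (kb_tau m \<circ> id) \<in> kbG m n" using kbG_comp[OF h(1)] kbG_gens by simp
  moreover have "\<forall>x. (h \<circ> (kb_tau m \<circ> id)) ((kb_tau_inv m \<circ> g) x) = x"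
    using h(2) by simp
  ultimately show ?case by blast
next
  case (kbG_sigma g)
  then obtain h where h: "h \<in> kbG m n" "\<forall>x. h (g x) = x" by blast
  have "h \<circ> (kb_sigma_inv m n \<circ> id) \<in> kbG m n" using kbG_comp[OF h(1)] kbG_gens by simp
  moreover have "\<forall>x. (h \<circ> (kb_sigma_inv m n \<circ> id)) ((kb_sigma m n \<circ> g) x) = x"
    using h(2) by simp
  ultimately show ?case by blast
next
  case (kbG_sigma_inv g)
  then obtain h where h: "h \<in> kbG m n" "\<forall>x. h (g x) = x" by blast
  have "h \<circ> (kb_sigma m n \<circ> id) \<in> kbG m n" using kbG_comp[OF h(1)] kbG_gens by simp
  moreover have "\<forall>x. (h \<circ> (kb_sigma m n \<circ> id)) ((kb_sigma_inv m n \<circ> g) x) = x"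
    using h(2) by simp
  ultimately show ?case by blast
qed

lemma sv_refl: "kb_same_vertex m n p p"
  unfolding kb_same_vertex_def by (rule bexI[of _ id]) (auto intro: kbG.kbG_id)

lemma sv_trans: "kb_same_vertex m n p q \<Longrightarrow> kb_same_vertex m n q r \<Longrightarrow> kb_same_vertex m n p r"
proof -
  assume "kb_same_vertex m n p q" "kb_same_vertex m n q r"
  then obtain g h where "g \<in> kbG m n" "g p = q" "h \<in> kbG m n" "h q = r"
    unfolding kb_same_vertex_def by blast
  then show ?thesis unfolding kb_same_vertex_def
    by (intro bexI[of _ "h \<circ> g"]) (simp_all add: kbG_comp)
qed

lemma sv_sym: "kb_same_vertex m n p q \<Longrightarrow> kb_same_vertex m n q p"
proof -
  assume "kb_same_vertex m n p q"
  then obtain g where g: "g \<in> kbG m n" "g p = q" unfolding kb_same_vertex_def by blast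
  obtain h where h: "h \<in> kbG m n" "\<forall>x. h (g x) = x" using kbG_inv[OF g(1)] by blast
  have "h q = p" using g(2) h(2) by metis
  then show ?thesis unfolding kb_same_vertex_def using h(1) by blast
qed

lemma sv_gen:
  assumes "f \<in> {kb_tau m, kb_tau_inv m, kb_sigma m n, kb_sigma_inv m n}"
  shows "kb_same_vertex m n p (f p)"
proof -
  have "f \<in> kbG m n" using assms kbG_gens by auto
  then show ?thesis unfolding kb_same_vertex_def by force
qed

lemma sv_horiz_nat: "kb_same_vertex m n (a, b) (a + int j * m, b)"
proof (induction j)
  case 0 then show ?case using sv_refl by simp
next
  case (Suc j)
  have "kb_same_vertex m n (a + int j * m, b) (kb_tau m (a + int j * m, b))" by (rule sv_gen) simp
  moreover have "kb_tau m (a + int j * m, b) = (a + int (Suc j) * m, b)" by (simp add: kb_tau_def algebra_simps)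
  ultimately show ?case using Suc sv_trans by metis
qed

lemma sv_horiz_nat': "kb_same_vertex m n (a, b) (a - int j * m, b)"
proof (induction j)
  case 0 then show ?case using sv_refl by simp
next
  case (Suc j)
  have "kb_same_vertex m n (a - int j * m, b) (kb_tau_inv m (a - int j * m, b))" by (rule sv_gen) simp
  moreover have "kb_tau_inv m (a - int j * m, b) = (a - int (Suc j) * m, b)" by (simp add: kb_tau_inv_def algebra_simps)
  ultimately show ?case using Suc sv_trans by metis
qed

lemma sv_horiz: "kb_same_vertex m n (a, b) (a + j * m, b)"
proof (cases "j \<ge> 0")
  case True
  then show ?thesis using sv_horiz_nat[of m n a b "nat j"] by simp
next
  case False
  then show ?thesis using sv_horiz_nat'[of m n a b "nat (-j)"] by simp
qed

lemma sv_vert_nat: "kb_same_vertex m n (a, b) (if even (int k) then a else m - 1 - a, b + int k * n)"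
proof (induction k)
  case 0 then show ?case using sv_refl by simp
next
  case (Suc k)
  let ?X = "(if even (int k) then a else m - 1 - a, b + int k * n)"
  have "kb_same_vertex m n ?X (kb_sigma m n ?X)" by (rule sv_gen) simp
  moreover have "kb_sigma m n ?X = (if even (int (Suc k)) then a else m - 1 - a, b + int (Suc k) * n)" by (simp add: kb_sigma_def algebra_simps)
  ultimately show ?case using Suc sv_trans by metis
qed

lemma sv_vert_nat': "kb_same_vertex m n (a, b) (if even (int k) then a else m - 1 - a, b - int k * n)"
proof (induction k)
  case 0 then show ?case using sv_refl by simp
next
  case (Suc k)
  let ?X = "(if even (int k) then a else m - 1 - a, b - int k * n)"
  have "kb_same_vertex m n ?X (kb_sigma_inv m n ?X)" by (rule sv_gen) simp
  moreover have "kb_sigma_inv m n ?X = (if even (int (Suc k)) then a else m - 1 - a, b - int (Suc k) * n)" by (simp add: kb_sigma_inv_def algebra_simps)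
  ultimately show ?case using Suc sv_trans by metis
qed

lemma sv_vert: "kb_same_vertex m n (a, b) (if even k then a else m - 1 - a, b + k * n)"
proof (cases "k \<ge> 0")
  case True
  then show ?thesis using sv_vert_nat[of m n a b "nat k"] by simp
next
  case False
  then show ?thesis using sv_vert_nat'[of m n a b "nat (-k)"] by simp
qed

lemma krel_sv:
  assumes "krel m n p q" shows "kb_same_vertex m n p q"
proof -
  obtain a b where p: "p = (a, b)" by (cases p)
  obtain k where k: "snd q = b + k * n" "m dvd (fst q - (if even k then a else m - 1 - a))"
    using assms unfolding krel_def p fst_conv snd_conv by blast
  obtain j where j: "fst q - (if even k then a else m - 1 - a) = m * j" using k(2) by (auto elim: dvdE)
  have "kb_same_vertex m n (a, b) (if even k then a else m - 1 - a, b + k * n)" by (rule sv_vert)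
  moreover have "kb_same_vertex m n (if even k then a else m - 1 - a, b + k * n)
      ((if even k then a else m - 1 - a) + j * m, b + k * n)" by (rule sv_horiz)
  moreover have "q = ((if even k then a else m - 1 - a) + j * m, b + k * n)"
    using j k(1) by (cases q) (auto simp: algebra_simps)
  ultimately show ?thesis using p sv_trans by metis
qed

lemma sv_iff_krel: "kb_same_vertex m n p q \<longleftrightarrow> krel m n p q"
  using sv_krel krel_sv by blast

lemma dvd_neg_diff: "(m::int) dvd x - y \<Longrightarrow> m dvd y - x"
  by (metis dvd_minus_iff minus_diff_eq)

lemma krel_kc:
  assumes "0 < n" "krel m n p q" shows "kc m n p = kc m n q"
proof -
  obtain a b where p: "p = (a, b)" by (cases p)
  obtain a' b' where q: "q = (a', b')" by (cases q)
  obtain k where k: "b' = b + k * n" "m dvd (a' - (if even k then a else m - 1 - a))"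
    using assms(2) unfolding krel_def p q fst_conv snd_conv by blast
  have d: "b' div n = b div n + k" using k(1) assms(1) by simp
  have r: "b' mod n = b mod n" using k(1) by simp
  have "(if even (b div n) then a else m - 1 - a) mod m = (if even (b div n + k) then a' else m - 1 - a') mod m"
  proof (cases "even k")
    case True
    then have "m dvd a' - a" using k(2) by simp
    then show ?thesis using True
      by (auto simp: mod_eq_dvd_iff intro: dvd_neg_diff)
  next
    case False
    then have h: "m dvd a' - (m - 1 - a)" using k(2) by simp
    have e1: "m - 1 - a' - a = - (a' - (m - 1 - a))" by simp
    have e2: "a - (m - 1 - a') = a' - (m - 1 - a)" by simp
    show ?thesis using False h
      by (auto simp: mod_eq_dvd_iff e1 e2 intro: dvd_neg_diff)
  qed
  then show ?thesis unfolding kc_def p q using d r by (auto split: if_splits)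
qed

lemma kc_krel:
  assumes "0 < n" "kc m n p = kc m n q" shows "krel m n p q"
proof -
  obtain a b where p: "p = (a, b)" by (cases p)
  obtain a' b' where q: "q = (a', b')" by (cases q)
  have r: "b mod n = b' mod n" and f: "(if even (b div n) then a else m - 1 - a) mod m = (if even (b' div n) then a' else m - 1 - a') mod m"
    using assms(2) unfolding kc_def p q by auto
  define k where "k = b' div n - b div n"
  have bk: "b' = b + k * n"
  proof -
    have e1: "b' div n * n + b' mod n = b'" by (rule div_mult_mod_eq)
    have e2: "b div n * n + b mod n = b" by (rule div_mult_mod_eq)
    show ?thesis unfolding k_def left_diff_distrib using e1 e2 r by linarith
  qed
  have "m dvd (a' - (if even k then a else m - 1 - a))"
  proof (cases "even k")
    case True
    then have "even (b div n) = even (b' div n)" unfolding k_def by auto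
    then have "m dvd a' - a \<or> m dvd (m - 1 - a') - (m - 1 - a)" using f
      by (cases "even (b div n)") (auto simp: mod_eq_dvd_iff intro: dvd_neg_diff)
    moreover have "(m - 1 - a') - (m - 1 - a) = - (a' - a)" by simp
    ultimately show ?thesis using True by (auto simp del: minus_diff_eq)
  next
    case False
    then have "even (b div n) = odd (b' div n)" unfolding k_def by auto
    then have "m dvd (m - 1 - a') - a \<or> m dvd a' - (m - 1 - a)" using f
      by (cases "even (b div n)") (auto simp: mod_eq_dvd_iff intro: dvd_neg_diff)
    moreover have "(m - 1 - a') - a = - (a' - (m - 1 - a))" by simp
    ultimately show ?thesis using False by (auto simp del: minus_diff_eq)
  qed
  then show ?thesis unfolding krel_def p q using bk by auto
qed

lemma sv_iff_kc: "0 < n \<Longrightarrow> kb_same_vertex m n p q \<longleftrightarrow> kc m n p = kc m n q"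
  using sv_iff_krel krel_kc kc_krel by blast

lemma kc_range: "0 < m \<Longrightarrow> 0 < n \<Longrightarrow> kc m n p \<in> {0..<m} \<times> {0..<n}"
  unfolding kc_def by auto

lemma kc_idem: "s \<in> {0..<m} \<times> {0..<n} \<Longrightarrow> kc m n s = s"
  unfolding kc_def by (cases s) auto

lemma card_S: "0 < m \<Longrightarrow> 0 < n \<Longrightarrow> int (card ({0..<m} \<times> {0..<n})) = m * n"
  by (simp add: card_cartesian_product)

lemma tour_N:
  assumes m: "0 < m" and n: "0 < n" and t: "kb_knight_tour m n p N"
  shows "int N = m * n"
proof -
  let ?f = "kc m n \<circ> p"
  let ?S = "{0..<m} \<times> {0..<n}"
  have inj: "inj_on ?f {..<N}"
  proof (rule inj_onI)
    fix i j assume "i \<in> {..<N}" "j \<in> {..<N}" "?f i = ?f j"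
    then show "i = j" using t n unfolding kb_knight_tour_def by (auto simp: sv_iff_kc)
  qed
  have img: "?f ` {..<N} = ?S"
  proof
    show "?f ` {..<N} \<subseteq> ?S" by (intro image_subsetI) (metis comp_apply kc_range[OF m n])
    show "?S \<subseteq> ?f ` {..<N}"
    proof
      fix s assume s: "s \<in> ?S"
      obtain i where "i < N" "kb_same_vertex m n s (p i)" using t unfolding kb_knight_tour_def by blast
      then have "kc m n s = kc m n (p i)" using sv_iff_kc[OF n] by blast
      then have "s = ?f i" using kc_idem[OF s] by simp
      then show "s \<in> ?f ` {..<N}" using \<open>i < N\<close> by blast
    qed
  qed
  have "card (?f ` {..<N}) = N" using card_image[OF inj] by simp
  then have "card ?S = N" using img by simp
  then show ?thesis using card_S[OF m n] by simp
qed

lemma knight_adj_cases: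
  "knight_adj p q \<longleftrightarrow> (\<bar>fst p - fst q\<bar> = 1 \<and> \<bar>snd p - snd q\<bar> = 2) \<or> (\<bar>fst p - fst q\<bar> = 2 \<and> \<bar>snd p - snd q\<bar> = 1)"
  unfolding knight_adj_def doubleton_eq_iff by auto

lemma knight_parity: "knight_adj p q \<Longrightarrow> odd ((fst q + snd q) - (fst p + snd p))"
proof -
  assume "knight_adj p q"
  then have h: "(\<bar>fst q - fst p\<bar> = 1 \<and> \<bar>snd q - snd p\<bar> = 2) \<or> (\<bar>fst q - fst p\<bar> = 2 \<and> \<bar>snd q - snd p\<bar> = 1)"
    unfolding knight_adj_cases by (simp add: abs_minus_commute)
  have e: "(fst q + snd q) - (fst p + snd p) = (fst q - fst p) + (snd q - snd p)" by simp
  have "(fst q - fst p) + (snd q - snd p) \<in> {3, 1, -1, -3}" using h by (auto simp: abs_if split: if_splits)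
  moreover have l: "\<And>x::int. x \<in> {3, 1, -1, -3} \<Longrightarrow> odd x" by auto
  ultimately show ?thesis unfolding e by blast
qed

lemma nec_parity:
  assumes m: "0 < m" and n: "0 < n" and t: "kb_cylindrical_tour m n p N" and "odd m"
  shows "odd n"
proof (rule ccontr)
  assume "\<not> odd n"
  then have en: "even n" by simp
  have tk: "kb_knight_tour m n p N" using t unfolding kb_cylindrical_tour_def by blast
  have NN: "int N = m * n" by (rule tour_N[OF m n tk])
  have "i \<le> N \<Longrightarrow> even (fst (p i) + snd (p i)) = even i" for i
  proof (induction i)
    case 0 then show ?case using tk unfolding kb_knight_tour_def by simp
  next
    case (Suc i)
    then have "knight_adj (p i) (p (Suc i))" using tk unfolding kb_knight_tour_def by auto
    then have "odd ((fst (p (Suc i)) + snd (p (Suc i))) - (fst (p i) + snd (p i)))" by (rule knight_parity)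
    then show ?case using Suc by auto
  qed
  then have "even (fst (p N) + snd (p N)) = even N" by simp
  moreover have "odd (fst (p N) + snd (p N))" using t \<open>odd m\<close> unfolding kb_cylindrical_tour_def by auto
  moreover have "even (int N)" using NN en by simp
  ultimately show False by simp
qed

lemma nec_22:
  assumes t: "kb_cylindrical_tour 2 2 p N"
  shows False
proof -
  have tk: "kb_knight_tour 2 2 p N" using t unfolding kb_cylindrical_tour_def by blast
  have N4: "N = 4" using tour_N[OF _ _ tk] by simp
  have D: "\<forall>i<4. \<forall>j<4. i \<noteq> j \<longrightarrow> \<not> kb_same_vertex 2 2 (p i) (p j)"
    using tk N4 unfolding kb_knight_tour_def by blast
  have C: "kb_same_vertex 2 2 (p 0) (p 4)" using tk N4 unfolding kb_knight_tour_def by blast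
  have dist: "\<not> kb_same_vertex 2 2 (p i) (p (Suc i))" if "i < 4" for i
  proof
    assume a: "kb_same_vertex 2 2 (p i) (p (Suc i))"
    show False
    proof (cases "Suc i < 4")
      case True then show False using a D by auto
    next
      case False
      then have "Suc i = 4" using that by simp
      then have "kb_same_vertex 2 2 (p i) (p 0)" using a C sv_trans sv_sym by metis
      moreover have "i \<noteq> 0" using \<open>Suc i = 4\<close> by simp
      ultimately show False using D \<open>i < 4\<close> by auto
    qed
  qed
  have step2: "\<bar>fst (p (Suc i)) - fst (p i)\<bar> = 2" if "i < 4" for i
  proof (rule ccontr)
    assume ne: "\<bar>fst (p (Suc i)) - fst (p i)\<bar> \<noteq> 2"
    have "knight_adj (p i) (p (Suc i))" using tk N4 that unfolding kb_knight_tour_def by auto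
    then have h: "\<bar>fst (p i) - fst (p (Suc i))\<bar> = 1 \<and> \<bar>snd (p i) - snd (p (Suc i))\<bar> = 2"
      using ne unfolding knight_adj_cases by (auto simp: abs_minus_commute)
    obtain a b where pi: "p i = (a, b)" by (cases "p i")
    obtain a' b' where ps: "p (Suc i) = (a', b')" by (cases "p (Suc i)")
    have "krel 2 2 (p i) (p (Suc i))"
    proof -
      have "b' = b + 2 \<or> b' = b - 2" using h pi ps by auto
      moreover have "a' = a + 1 \<or> a' = a - 1" using h pi ps by auto
      ultimately show ?thesis unfolding krel_def pi ps
        by (elim disjE) (rule exI[of _ 1] exI[of _ "-1"]; simp)+
    qed
    then show False using dist[OF that] sv_iff_krel by blast
  qed
  have "i \<le> 4 \<Longrightarrow> 4 dvd (fst (p i) - 2 * int i)" for i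
  proof (induction i)
    case 0 then show ?case using tk unfolding kb_knight_tour_def by simp
  next
    case (Suc i)
    then have ih: "4 dvd (fst (p i) - 2 * int i)" by simp
    have "\<bar>fst (p (Suc i)) - fst (p i)\<bar> = 2" using step2 Suc.prems by simp
    then have "fst (p (Suc i)) - 2 * int (Suc i) = (fst (p i) - 2 * int i) \<or>
               fst (p (Suc i)) - 2 * int (Suc i) = (fst (p i) - 2 * int i) - 4" by auto
    then show ?case using ih by (metis dvd_diff dvd_refl)
  qed
  from this[of 4] have "4 dvd (fst (p 4) - 8)" by simp
  moreover have "fst (p 4) = 2 \<or> fst (p 4) = -2" using t N4 unfolding kb_cylindrical_tour_def by auto
  ultimately show False by auto
qed

lemma tour_intro:
  assumes m: "0 < m" and n: "0 < n" and NN: "int N = m * n" and N3: "3 \<le> N"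
    and p0: "p 0 = (0, 0)" and adj: "\<forall>i<N. knight_adj (p i) (p (Suc i))"
    and pe: "p N = (m, 0) \<or> p N = (-m, 0)"
    and inj: "inj_on (kc m n \<circ> p) {..<N}"
  shows "kb_cylindrical_tour m n p N"
proof -
  let ?h = "\<lambda>x. kc m n (p x)"
  let ?S = "{0..<m} \<times> {0..<n}"
  have close: "krel m n (p 0) (p N)"
    using pe unfolding krel_def p0 by (auto intro!: exI[of _ 0])
  then have hN: "?h N = ?h 0" using krel_kc[OF n] by simp
  have injh: "x < N \<Longrightarrow> y < N \<Longrightarrow> ?h x = ?h y \<Longrightarrow> x = y" for x y
    using inj unfolding inj_on_def by auto
  have img: "(kc m n \<circ> p) ` {..<N} = ?S"
  proof (rule card_subset_eq)
    show "finite ?S" by simp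
    show "(kc m n \<circ> p) ` {..<N} \<subseteq> ?S" by (intro image_subsetI) (metis comp_apply kc_range[OF m n])
    have "card ((kc m n \<circ> p) ` {..<N}) = N" using card_image[OF inj] by simp
    moreover have "int (card ?S) = int N" using card_S[OF m n] NN by (simp only:)
    then have "card ?S = N" by (simp only: of_nat_eq_iff)
    ultimately show "card ((kc m n \<circ> p) ` {..<N}) = card ?S" by simp
  qed
  have cover: "\<exists>i<N. kb_same_vertex m n q (p i)" for q
  proof -
    have "kc m n q \<in> ?S" using kc_range[OF m n] by blast
    then obtain i where "i < N" "kc m n q = ?h i" using img by force
    then show ?thesis using sv_iff_kc[OF n] by blast
  qed
  define nx where "nx x = (if x = N then 0 else x)" for x
  have hnx: "x \<le> N \<Longrightarrow> ?h x = ?h (nx x)" for x using hN unfolding nx_def by auto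
  have injh2: "x \<le> N \<Longrightarrow> y \<le> N \<Longrightarrow> ?h x = ?h y \<Longrightarrow> nx x = nx y" for x y
  proof -
    assume a: "x \<le> N" "y \<le> N" "?h x = ?h y"
    have "nx x < N" "nx y < N" using a N3 unfolding nx_def by auto
    moreover have "?h (nx x) = ?h (nx y)" using a hnx by metis
    ultimately show ?thesis using injh by blast
  qed
  have edges: "\<not> kb_same_edge m n (p i, p (Suc i)) (p j, p (Suc j))"
    if ij: "i < N" "j < N" "i \<noteq> j" for i j
  proof
    assume "kb_same_edge m n (p i, p (Suc i)) (p j, p (Suc j))"
    then obtain g where g: "g \<in> kbG m n" "{g (p i), g (p (Suc i))} = {p j, p (Suc j)}"
      unfolding kb_same_edge_def by auto
    have sv: "kb_same_vertex m n x (g x)" for x using g(1) unfolding kb_same_vertex_def by blast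
    have hg: "kc m n (g x) = kc m n x" for x using sv[of x] sv_iff_kc[OF n] by metis
    have A: "?h i = ?h j \<or> ?h i = ?h (Suc j)"
    proof -
      have "g (p i) = p j \<or> g (p i) = p (Suc j)" using g(2) by (auto simp: doubleton_eq_iff)
      then show ?thesis using hg by metis
    qed
    have B: "?h (Suc i) = ?h j \<or> ?h (Suc i) = ?h (Suc j)"
    proof -
      have "g (p (Suc i)) = p j \<or> g (p (Suc i)) = p (Suc j)" using g(2) by (auto simp: doubleton_eq_iff)
      then show ?thesis using hg by metis
    qed
    have A': "nx i = nx j \<or> nx i = nx (Suc j)" using A injh2 ij by (meson Suc_leI less_imp_le)
    have B': "nx (Suc i) = nx j \<or> nx (Suc i) = nx (Suc j)" using B injh2 ij by (meson Suc_leI less_imp_le)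
    show False using A' B' ij N3 unfolding nx_def by (auto split: if_splits)
  qed
  show ?thesis
    unfolding kb_cylindrical_tour_def kb_knight_tour_def
  proof (intro conjI allI impI)
    show "p 0 = (0, 0)" by (rule p0)
    show "\<And>i. i < N \<Longrightarrow> knight_adj (p i) (p (Suc i))" using adj by blast
    show "kb_same_vertex m n (p 0) (p N)" using close sv_iff_krel by blast
    show "\<And>i j. i < N \<Longrightarrow> j < N \<Longrightarrow> i \<noteq> j \<Longrightarrow> \<not> kb_same_vertex m n (p i) (p j)"
      using injh sv_iff_kc[OF n] by blast
    show "\<And>q. \<exists>i<N. kb_same_vertex m n q (p i)" by (rule cover)
    show "\<And>i j. i < N \<Longrightarrow> j < N \<Longrightarrow> i \<noteq> j \<Longrightarrow> \<not> kb_same_edge m n (p i, p (Suc i)) (p j, p (Suc j))"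
      by (rule edges)
    show "p N = (m, 0) \<or> p N = (- m, 0)" by (rule pe)
  qed
qed





lemma knight_adj_shift: "knight_adj (a + c, b) (a' + c, b') = knight_adj (a, b) (a', b')"
  unfolding knight_adj_def by simp

definition stackp :: "(nat \<Rightarrow> int \<times> int) \<Rightarrow> nat \<Rightarrow> int \<Rightarrow> nat \<Rightarrow> int \<times> int" where
  "stackp w L t i = (fst (w (i mod L)) + int (i div L) * t, snd (w (i mod L)))"

lemma stack_adj:
  assumes L: "0 < L" and wL: "w L = (t, 0)" and w0: "w 0 = (0, 0)"
    and wadj: "\<forall>i<L. knight_adj (w i) (w (Suc i))"
  shows "knight_adj (stackp w L t i) (stackp w L t (Suc i))"
proof -
  have key: "stackp w L t (Suc i) = (fst (w (Suc (i mod L))) + int (i div L) * t, snd (w (Suc (i mod L))))"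
  proof (cases "Suc (i mod L) = L")
    case True
    then have "Suc i mod L = 0" "Suc i div L = Suc (i div L)"
      by (simp_all add: mod_Suc div_Suc)
    then show ?thesis unfolding stackp_def using True wL w0 by (simp add: algebra_simps)
  next
    case False
    then have "Suc i mod L = Suc (i mod L)" "Suc i div L = i div L"
      by (simp_all add: mod_Suc div_Suc)
    then show ?thesis unfolding stackp_def by simp
  qed
  have "knight_adj (w (i mod L)) (w (Suc (i mod L)))" using wadj L by simp
  moreover obtain a b where ab: "w (i mod L) = (a, b)" by (cases "w (i mod L)")
  moreover obtain a' b' where ab': "w (Suc (i mod L)) = (a', b')" by (cases "w (Suc (i mod L))")
  moreover have "stackp w L t i = (fst (w (i mod L)) + int (i div L) * t, snd (w (i mod L)))"
    unfolding stackp_def by simp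
  ultimately show ?thesis unfolding key by (simp add: knight_adj_shift)
qed

lemma small_dvd_zero: "(k::int) dvd d \<Longrightarrow> \<bar>d\<bar> < k \<Longrightarrow> d = 0"
proof (rule ccontr)
  assume a: "k dvd d" "\<bar>d\<bar> < k" "d \<noteq> 0"
  then have "\<bar>k\<bar> \<le> \<bar>d\<bar>" using dvd_imp_le_int by blast
  then show False using a(2) abs_ge_self[of k] by linarith
qed

lemma stack_inj:
  assumes t: "0 < t" and n: "0 < n" and K: "0 < K" and L: "0 < L"
    and winj: "inj_on (kc t n \<circ> w) {..<L}"
  shows "inj_on (kc (int K * t) n \<circ> stackp w L t) {..<K * L}"
proof (rule inj_onI)
  fix i i' assume i: "i \<in> {..<K * L}" and i': "i' \<in> {..<K * L}"
    and e: "(kc (int K * t) n \<circ> stackp w L t) i = (kc (int K * t) n \<circ> stackp w L t) i'"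
  define M where "M = int K * t"
  define r where "r = i mod L"
  define r' where "r' = i' mod L"
  define j where "j = int (i div L)"
  define j' where "j' = int (i' div L)"
  obtain x y where wr: "w r = (x, y)" by (cases "w r")
  obtain x' y' where wr': "w r' = (x', y')" by (cases "w r'")
  have pi: "stackp w L t i = (x + j * t, y)" unfolding stackp_def r_def[symmetric] j_def[symmetric] wr by simp
  have pi': "stackp w L t i' = (x' + j' * t, y')" unfolding stackp_def r'_def[symmetric] j'_def[symmetric] wr' by simp
  have "kc M n (x + j * t, y) = kc M n (x' + j' * t, y')" using e unfolding M_def comp_def pi pi' by simp
  then have "krel M n (x + j * t, y) (x' + j' * t, y')" using kc_krel[OF n] by blast
  then obtain k where k1: "y' = y + k * n"
     and k2: "M dvd (x' + j' * t - (if even k then x + j * t else M - 1 - (x + j * t)))"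
    unfolding krel_def fst_conv snd_conv by blast
  have tM: "t dvd M" unfolding M_def by simp
  have "t dvd (x' - (if even k then x else t - 1 - x))"
  proof (cases "even k")
    case True
    then have "M dvd (x' + j' * t - (x + j * t))" using k2 by simp
    then have E: "t dvd (x' + j' * t - (x + j * t))" using tM dvd_trans by blast
    have "x' - x = (x' + j' * t - (x + j * t)) - (j' - j) * t" by (simp add: algebra_simps)
    then have "t dvd (x' - x)" using E by (metis dvd_diff dvd_triv_right)
    then show ?thesis using True by simp
  next
    case False
    then have "M dvd (x' + j' * t - (M - 1 - (x + j * t)))" using k2 by simp
    then have E: "t dvd (x' + j' * t - (M - 1 - (x + j * t)))" using tM dvd_trans by blast
    have "x' - (t - 1 - x) = ((x' + j' * t - (M - 1 - (x + j * t))) - (j' + j + 1) * t) + M" by (simp add: algebra_simps)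
    moreover have "t dvd ((x' + j' * t - (M - 1 - (x + j * t))) - (j' + j + 1) * t)" using E by (metis dvd_diff dvd_triv_right)
    ultimately have "t dvd (x' - (t - 1 - x))" using tM by (metis dvd_add)
    then show ?thesis using False by simp
  qed
  then have "krel t n (w r) (w r')" unfolding krel_def wr wr' fst_conv snd_conv using k1 by blast
  then have "kc t n (w r) = kc t n (w r')" using krel_kc[OF n] by blast
  moreover have "r < L" "r' < L" unfolding r_def r'_def using L by auto
  ultimately have rr: "r = r'" using winj unfolding inj_on_def by auto
  then have "y = y'" "x = x'" using wr wr' by auto
  then have "k * n = 0" using k1 by simp
  then have k0: "k = 0" using n by simp
  then have "M dvd (j' - j) * t" using k2 \<open>x = x'\<close> by (simp add: algebra_simps)
  then have "int K dvd (j' - j)" unfolding M_def using t by simp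
  moreover have "0 \<le> j" "0 \<le> j'" "j < int K" "j' < int K"
    unfolding j_def j'_def using i i' L by (auto simp: less_mult_imp_div_less)
  moreover have "\<bar>j' - j\<bar> < int K" using calculation(2-5) by (simp add: abs_if)
  ultimately have "j = j'" using small_dvd_zero[of "int K" "j' - j"] by simp
  then have "i div L = i' div L" unfolding j_def j'_def by simp
  then show "i = i'" using rr unfolding r_def r'_def by (metis div_mult_mod_eq)
qed

lemma stack_tour:
  assumes t: "0 < t" and n: "0 < n" and K: "0 < K" and L: "int L = t * n"
    and w0: "w 0 = (0, 0)" and wL: "w L = (t, 0)"
    and wadj: "\<forall>i<L. knight_adj (w i) (w (Suc i))"
    and winj: "inj_on (kc t n \<circ> w) {..<L}"
    and N3: "3 \<le> K * L"
  shows "\<exists>p N. kb_cylindrical_tour (int K * t) n p N"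
proof -
  have L0: "0 < L" using L t n by (metis mult_pos_pos of_nat_0_less_iff)
  have "kb_cylindrical_tour (int K * t) n (stackp w L t) (K * L)"
  proof (rule tour_intro)
    show "0 < int K * t" using K t by simp
    show "0 < n" by (rule n)
    show "int (K * L) = int K * t * n" using L by simp
    show "3 \<le> K * L" by (rule N3)
    show "stackp w L t 0 = (0, 0)" unfolding stackp_def using w0 by simp
    show "\<forall>i<K * L. knight_adj (stackp w L t i) (stackp w L t (Suc i))"
      using stack_adj[OF L0 wL w0 wadj] by blast
    have "stackp w L t (K * L) = (int K * t, 0)" unfolding stackp_def using w0 L0 by simp
    then show "stackp w L t (K * L) = (int K * t, 0) \<or> stackp w L t (K * L) = (- (int K * t), 0)" by blast
    show "inj_on (kc (int K * t) n \<circ> stackp w L t) {..<K * L}" by (rule stack_inj[OF t n K L0 winj])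
  qed
  then show ?thesis by blast
qed

lemma all_less_two_cases: "Suc i mod 2 = 1 - i mod 2"
  by (simp add: mod_Suc)

definition wF1 :: "nat \<Rightarrow> nat \<Rightarrow> int \<times> int" where
  "wF1 k i = (if i \<le> k then (int (i mod 2), 2 * int i)
     else if i \<le> 2 * k then (3 - int (i mod 2), 4 * int k + 1 - 2 * int i) else (1, 0))"

lemma F1_adj:
  assumes "1 \<le> k" "i < 2 * k + 1"
  shows "knight_adj (wF1 k i) (wF1 k (Suc i))"
proof -
  have m2: "int (Suc i mod 2) = 1 - int (i mod 2)" "int (i mod 2) = 0 \<or> int (i mod 2) = 1"
    by (auto simp: mod_Suc)
  consider "i < k" | "i = k" | "k < i \<and> i < 2 * k" | "i = 2 * k" using assms by linarith
  then show ?thesis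
  proof cases
    case 1 then show ?thesis using m2 unfolding wF1_def knight_adj_cases by auto
  next
    case 2 then show ?thesis using m2 assms unfolding wF1_def knight_adj_cases by auto
  next
    case 3 then show ?thesis using m2 unfolding wF1_def knight_adj_cases by auto
  next
    case 4 then show ?thesis using m2 assms unfolding wF1_def knight_adj_cases by auto
  qed
qed

lemma F1_snd: "i < 2 * k + 1 \<Longrightarrow> 0 \<le> snd (wF1 k i) \<and> snd (wF1 k i) < 2 * int k + 1"
  unfolding wF1_def by auto

lemma F1_inj:
  assumes "1 \<le> k"
  shows "inj_on (kc 1 (2 * int k + 1) \<circ> wF1 k) {..<2 * k + 1}"
proof (rule inj_onI)
  fix i j assume i: "i \<in> {..<2 * k + 1}" and j: "j \<in> {..<2 * k + 1}"
    and e: "(kc 1 (2 * int k + 1) \<circ> wF1 k) i = (kc 1 (2 * int k + 1) \<circ> wF1 k) j"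
  have "snd (wF1 k i) mod (2 * int k + 1) = snd (wF1 k j) mod (2 * int k + 1)"
    using e unfolding kc_def by simp
  then have "snd (wF1 k i) = snd (wF1 k j)" using F1_snd[of i k] F1_snd[of j k] i j by simp
  then have sij: "snd (wF1 k i) = snd (wF1 k j)" .
  have par: "2 * int a + 2 * int b \<noteq> 4 * int k + 1" for a b :: nat by presburger
  show "i = j"
  proof (cases "i \<le> k")
    case True
    show ?thesis
    proof (cases "j \<le> k")
      case True
      then show ?thesis using sij \<open>i \<le> k\<close> unfolding wF1_def by simp
    next
      case False
      then have "2 * int i = 4 * int k + 1 - 2 * int j" using sij \<open>i \<le> k\<close> j unfolding wF1_def by simp
      then show ?thesis using par[of i j] by linarith
    qed
  next
    case False
    show ?thesis
    proof (cases "j \<le> k")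
      case True
      then have "2 * int j = 4 * int k + 1 - 2 * int i" using sij False i unfolding wF1_def by simp
      then show ?thesis using par[of i j] by linarith
    next
      case False
      then show ?thesis using sij \<open>\<not> i \<le> k\<close> i j unfolding wF1_def by simp
    qed
  qed
qed

lemma F1_tour:
  assumes m: "0 < m" and "1 \<le> k"
  shows "\<exists>p N. kb_cylindrical_tour m (2 * int k + 1) p N"
proof -
  have "\<exists>p N. kb_cylindrical_tour (int (nat m) * 1) (2 * int k + 1) p N"
  proof (rule stack_tour[where w = "wF1 k" and L = "2 * k + 1"])
    show "0 < (1::int)" by simp
    show "0 < 2 * int k + 1" by simp
    show "0 < nat m" using m by simp
    show "int (2 * k + 1) = 1 * (2 * int k + 1)" by simp
    show "wF1 k 0 = (0, 0)" unfolding wF1_def by simp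
    show "wF1 k (2 * k + 1) = (1, 0)" unfolding wF1_def by simp
    show "\<forall>i<2 * k + 1. knight_adj (wF1 k i) (wF1 k (Suc i))" using F1_adj assms by blast
    show "inj_on (kc 1 (2 * int k + 1) \<circ> wF1 k) {..<2 * k + 1}" by (rule F1_inj[OF assms(2)])
    have "1 * 3 \<le> nat m * (2 * k + 1)" using m assms by (intro mult_le_mono) auto
    then show "3 \<le> nat m * (2 * k + 1)" by simp
  qed
  then show ?thesis using m by simp
qed

definition wF2 :: "nat \<Rightarrow> nat \<Rightarrow> int \<times> int" where
  "wF2 n i = (if i \<le> n + 1 then (2 * int (i mod 2), int i)
     else if i \<le> 2 * n - 1 then (1 + 2 * int ((i - n) mod 2), 2 * int n + 1 - int i) else (2, 0))"

lemma F2_adj: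
  assumes "3 \<le> n" "i < 2 * n"
  shows "knight_adj (wF2 n i) (wF2 n (Suc i))"
proof -
  have m2: "int (Suc i mod 2) = 1 - int (i mod 2)" "int (i mod 2) = 0 \<or> int (i mod 2) = 1"
    by (auto simp: mod_Suc)
  consider "i \<le> n" | "i = n + 1" | "n + 2 \<le> i \<and> i < 2 * n - 1" | "i = 2 * n - 1" using assms by linarith
  then show ?thesis
  proof cases
    case 1 then show ?thesis using m2 unfolding wF2_def knight_adj_cases by auto
  next
    case 2 
    have "int ((i + 1 - n) mod 2) = 0" using 2 by simp
    then show ?thesis using m2 assms 2 unfolding wF2_def knight_adj_cases by auto
  next
    case 3
    have "Suc i - n = Suc (i - n)" using 3 by (intro Suc_diff_le) linarith
    then have "int ((Suc i - n) mod 2) = 1 - int ((i - n) mod 2)" "int ((i - n) mod 2) = 0 \<or> int ((i - n) mod 2) = 1"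
      by (auto simp: mod_Suc)
    then show ?thesis using 3 unfolding wF2_def knight_adj_cases by auto
  next
    case 4
    have "int ((i - n) mod 2) = 0 \<or> int ((i - n) mod 2) = 1" by auto
    then show ?thesis using 4 assms unfolding wF2_def knight_adj_cases by auto
  qed
qed

lemma F2_kc:
  assumes "3 \<le> n" "i < 2 * n"
  shows "kc 2 (int n) (wF2 n i) = (if i < n then (0, int i) else if i \<le> n + 1 then (1, int i - int n) else (1, 2 * int n + 1 - int i))"
proof -
  consider "i < n" | "n \<le> i \<and> i \<le> n + 1" | "n + 2 \<le> i" using assms by linarith
  then show ?thesis
  proof cases
    case 1
    then have "int i div int n = 0" "int i mod int n = int i" by simp_all
    then show ?thesis using 1 unfolding kc_def wF2_def by simp
  next
    case 2
    then have "i div n = 1" using assms by (intro div_nat_eqI) auto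
    then have d: "int i div int n = 1" by (simp add: zdiv_int[symmetric])
    have "int i mod int n = int i - int i div int n * int n" by (simp add: minus_div_mult_eq_mod)
    then have "int i mod int n = int i - int n" using d by simp
    moreover have "(1 - 2 * int (i mod 2)) mod 2 = 1" by (simp add: mod_diff_eq[symmetric])
    ultimately show ?thesis using 2 d assms unfolding kc_def wF2_def by simp
  next
    case 3
    then have b: "0 \<le> 2 * int n + 1 - int i" "2 * int n + 1 - int i < int n" using assms by auto
    then have "(2 * int n + 1 - int i) div int n = 0" "(2 * int n + 1 - int i) mod int n = 2 * int n + 1 - int i"
      by simp_all
    moreover have "(1 + 2 * int ((i - n) mod 2)) mod 2 = 1" by simp
    ultimately show ?thesis using 3 assms unfolding kc_def wF2_def by simp
  qed
qed

lemma F2_inj: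
  assumes "3 \<le> n"
  shows "inj_on (kc 2 (int n) \<circ> wF2 n) {..<2 * n}"
proof (rule inj_onI)
  fix i j assume i: "i \<in> {..<2 * n}" and j: "j \<in> {..<2 * n}"
    and e: "(kc 2 (int n) \<circ> wF2 n) i = (kc 2 (int n) \<circ> wF2 n) j"
  have "(if i < n then (0::int, int i) else if i \<le> n + 1 then (1, int i - int n) else (1, 2 * int n + 1 - int i)) =
        (if j < n then (0, int j) else if j \<le> n + 1 then (1, int j - int n) else (1, 2 * int n + 1 - int j))"
    using e F2_kc[OF assms, of i] F2_kc[OF assms, of j] i j by simp
  then show "i = j" using i j assms by (auto split: if_splits)
qed

lemma F2_tour:
  assumes K: "0 < K" and n: "3 \<le> n"
  shows "\<exists>p N. kb_cylindrical_tour (int K * 2) (int n) p N"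
proof (rule stack_tour[where w = "wF2 n" and L = "2 * n"])
  show "0 < (2::int)" by simp
  show "0 < int n" using n by simp
  show "0 < K" by (rule K)
  show "int (2 * n) = 2 * int n" by simp
  show "wF2 n 0 = (0, 0)" unfolding wF2_def by simp
  show "wF2 n (2 * n) = (2, 0)" unfolding wF2_def using n by simp
  show "\<forall>i<2 * n. knight_adj (wF2 n i) (wF2 n (Suc i))" using F2_adj n by blast
  show "inj_on (kc 2 (int n) \<circ> wF2 n) {..<2 * n}" by (rule F2_inj[OF n])
  have "1 * 6 \<le> K * (2 * n)" using K n by (intro mult_le_mono) auto
  then show "3 \<le> K * (2 * n)" by simp
qed

definition wl :: "(int \<times> int) list \<Rightarrow> nat \<Rightarrow> int \<times> int" where
  "wl xs i = (if i < length xs then xs ! i else (0, 0))"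

lemma lessThan_8: "{..<8::nat} = {0,1,2,3,4,5,6,7}" by auto
lemma lessThan_5: "{..<5::nat} = {0,1,2,3,4}" by auto
lemma lessThan_3: "{..<3::nat} = {0,1,2}" by auto
lemma lessThan_2: "{..<2::nat} = {0,1}" by auto

definition B42 :: "(int \<times> int) list" where
  "B42 = [(0,0),(1,2),(3,3),(2,1),(4,2),(5,0),(3,1),(2,-1),(4,0)]"

lemma B42_adj: "\<forall>i<8. knight_adj (wl B42 i) (wl B42 (Suc i))"
proof -
  have "\<forall>i\<in>{..<8}. knight_adj (wl B42 i) (wl B42 (Suc i))"
    unfolding lessThan_8 by (simp add: wl_def B42_def knight_adj_cases)
  then show ?thesis by simp
qed

lemma B42_inj: "inj_on (kc 4 2 \<circ> wl B42) {..<8}"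
  unfolding inj_on_def lessThan_8 by (simp add: wl_def B42_def kc_def)

definition pF4 :: "int \<Rightarrow> nat \<Rightarrow> int \<times> int" where
  "pF4 m i = (if i = 0 then (0, 0) else if i = 1 then (1, 2)
     else if i + 4 \<le> nat m then (int i + 1, if even i then 3 else 1)
     else if i + 3 = nat m then (m - 1, 2) else if i + 2 = nat m then (m + 1, 3)
     else if i + 1 = nat m then (m + 2, 1) else (m, 0))"

definition vF4 :: "int \<Rightarrow> nat \<Rightarrow> int" where
  "vF4 m i = (if i = 0 then 0 else if i = 1 then 1 else if i + 4 \<le> nat m then m - 2 - int i
     else if i + 3 = nat m then m - 1 else if i + 2 = nat m then m - 2 else m - 3)"

lemma kc_n1: "kc m 1 (a, b) = ((if even b then a else m - 1 - a) mod m, 0)"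
  unfolding kc_def by simp

lemma F4_kc:
  assumes m: "7 \<le> m" and i: "i < nat m"
  shows "kc m 1 (pF4 m i) = (vF4 m i, 0)"
proof -
  consider "i = 0" | "i = 1" | "i \<noteq> 0 \<and> i \<noteq> 1 \<and> i + 4 \<le> nat m" | "i + 3 = nat m" | "i + 2 = nat m" | "i + 1 = nat m"
    using i by linarith
  then show ?thesis
  proof cases
    case 1 then show ?thesis unfolding pF4_def vF4_def by (simp add: kc_n1)
  next
    case 2 then show ?thesis using m unfolding pF4_def vF4_def by (simp add: kc_n1)
  next
    case 3
    have md: "(m - 2 - int i) mod m = m - 2 - int i" using 3 m by (intro mod_pos_pos_trivial) auto
    have p: "pF4 m i = (int i + 1, if even i then 3 else 1)" using 3 unfolding pF4_def by simp
    have v: "vF4 m i = m - 2 - int i" using 3 unfolding vF4_def by simp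
    have o: "odd (if even i then 3 else 1 :: int)" by simp
    have "kc m 1 (int i + 1, if even i then 3 else 1) = ((m - 1 - (int i + 1)) mod m, 0)"
      unfolding kc_n1 using o by (simp only: if_False)
    also have "m - 1 - (int i + 1) = m - 2 - int i" by simp
    finally show ?thesis unfolding p v md .
  next
    case 4
    have "(m - 1) mod m = m - 1" using m by (intro mod_pos_pos_trivial) auto
    then show ?thesis using 4 m unfolding pF4_def vF4_def by (auto simp: kc_n1)
  next
    case 5
    have "(m - 1 - (m + 1)) mod m = m - 2"
    proof -
      have "m - 1 - (m + 1) = (m - 2) + (-1) * m" by simp
      then have "(m - 1 - (m + 1)) mod m = (m - 2) mod m" by (metis mod_mult_self1)
      also have "\<dots> = m - 2" using m by (intro mod_pos_pos_trivial) auto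
      finally show ?thesis .
    qed
    then show ?thesis using 5 m unfolding pF4_def vF4_def by (auto simp: kc_n1)
  next
    case 6
    have "(m - 1 - (m + 2)) mod m = m - 3"
    proof -
      have "m - 1 - (m + 2) = (m - 3) + (-1) * m" by simp
      then have "(m - 1 - (m + 2)) mod m = (m - 3) mod m" by (metis mod_mult_self1)
      also have "\<dots> = m - 3" using m by (intro mod_pos_pos_trivial) auto
      finally show ?thesis .
    qed
    then show ?thesis using 6 m unfolding pF4_def vF4_def by (auto simp: kc_n1)
  qed
qed

lemma F4_adj:
  assumes m: "7 \<le> m" "odd m" and i: "i < nat m"
  shows "knight_adj (pF4 m i) (pF4 m (Suc i))"
proof -
  have oM: "odd (nat m)" using m by (simp add: even_nat_iff)
  consider "i = 0" | "i = 1" | "i \<noteq> 0 \<and> i \<noteq> 1 \<and> i + 5 \<le> nat m" | "i + 4 = nat m" | "i + 3 = nat m" | "i + 2 = nat m" | "i + 1 = nat m"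
    using i by linarith
  then show ?thesis
  proof cases
    case 1 then show ?thesis using m unfolding pF4_def knight_adj_cases by auto
  next
    case 2 then show ?thesis using m unfolding pF4_def knight_adj_cases by auto
  next
    case 3 then show ?thesis unfolding pF4_def knight_adj_cases by auto
  next
    case 4
    then have "odd i" using oM by (metis even_add odd_numeral add.commute even_plus_one_iff numeral_Bit0 numeral_One one_add_one)
    then show ?thesis using 4 m unfolding pF4_def knight_adj_cases by auto
  next
    case 5 then show ?thesis using m unfolding pF4_def knight_adj_cases by auto
  next
    case 6 then show ?thesis using m unfolding pF4_def knight_adj_cases by auto
  next
    case 7 then show ?thesis using m unfolding pF4_def knight_adj_cases by auto
  qed
qed

lemma F4_tour:
  assumes m: "7 \<le> m" "odd m"
  shows "\<exists>p N. kb_cylindrical_tour m 1 p N"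
proof -
  have "kb_cylindrical_tour m 1 (pF4 m) (nat m)"
  proof (rule tour_intro)
    show "0 < m" "0 < (1::int)" using m by auto
    show "int (nat m) = m * 1" using m by simp
    show "3 \<le> nat m" using m by simp
    show "pF4 m 0 = (0, 0)" unfolding pF4_def by simp
    show "\<forall>i<nat m. knight_adj (pF4 m i) (pF4 m (Suc i))" using F4_adj m by blast
    show "pF4 m (nat m) = (m, 0) \<or> pF4 m (nat m) = (- m, 0)" using m unfolding pF4_def by simp
    show "inj_on (kc m 1 \<circ> pF4 m) {..<nat m}"
    proof (rule inj_onI)
      fix i j assume i: "i \<in> {..<nat m}" and j: "j \<in> {..<nat m}"
        and e: "(kc m 1 \<circ> pF4 m) i = (kc m 1 \<circ> pF4 m) j"
      then have "vF4 m i = vF4 m j" using F4_kc[OF m(1)] by simp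
      then show "i = j" using i j m unfolding vF4_def by (auto split: if_splits)
    qed
  qed
  then show ?thesis by blast
qed

lemma kc2I: "b div 2 = d \<Longrightarrow> b mod 2 = r \<Longrightarrow> (if even d then a else m - 1 - a) = A + c * m \<Longrightarrow> 0 \<le> A \<Longrightarrow> A < m \<Longrightarrow> kc m 2 (a, b) = (A, r)"
proof -
  assume h: "b div 2 = d" "b mod 2 = r" "(if even d then a else m - 1 - a) = A + c * m" "0 \<le> A" "A < m"
  have "(A + c * m) mod m = A" using h(4,5) by simp
  then have "(if even d then a else m - 1 - a) mod m = A" by (simp only: h(3))
  then show ?thesis unfolding kc_def fst_conv snd_conv h(1) h(2) by simp
qed

definition B5 :: "(int \<times> int) list" where "B5 = [(4,3),(6,4),(5,2),(3,1),(5,0),(3,(-1)),(4,1),(6,2)]"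

definition S5 :: "(int \<times> int) list" where "S5 = [(4,3),(5,1),(7,0),(8,2),(6,1),(7,(-1)),(8,(-3)),(6,(-2)),(8,(-1)),(6,0)]"

definition P5 :: "(int \<times> int) list" where "P5 = [(0,0),(1,2),(2,4)]"


definition pF5 :: "nat \<Rightarrow> nat \<Rightarrow> int \<times> int" where
  "pF5 k i = (if i < 3 then P5 ! i
     else if i < 3 + 8 * k then (fst (B5 ! ((i - 3) mod 8)) + 4 * int ((i - 3) div 8), snd (B5 ! ((i - 3) mod 8)))
     else (fst (S5 ! (i - 3 - 8 * k)) + 4 * int k, snd (S5 ! (i - 3 - 8 * k))))"

definition idxF5 :: "nat \<Rightarrow> int \<times> int \<Rightarrow> int" where
  "idxF5 k v = (let m = 6 + 4 * int k; x = fst v; y = snd v in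
   if y = 0 then
     (if 3 \<le> x \<and> x \<le> m - 4 then
        (if x mod 4 = 2 then 4 + 8 * ((x - 6) div 4)
         else if x mod 4 = 0 then 5 + 8 * ((m - 6 - x) div 4)
         else if x mod 4 = 1 then 7 + 8 * ((x - 5) div 4)
         else 10 + 8 * ((m - 7 - x) div 4))
      else if x = 0 then 0 else if x = m - 2 then 1 else if x = 2 then 2
      else if x = 1 then 5 + 8 * int k else if x = m - 3 then 6 + 8 * int k else 10 + 8 * int k)
   else
     (if 3 \<le> x \<and> x \<le> m - 4 then
        (if x mod 4 = 1 then 3 + 8 * ((m - 5 - x) div 4)
         else if x mod 4 = 3 then 6 + 8 * ((x - 3) div 4)
         else if x mod 4 = 2 then 8 + 8 * ((m - 4 - x) div 4)
         else 9 + 8 * ((x - 4) div 4))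
      else if x = 1 then 3 + 8 * int k else if x = m - 1 then 4 + 8 * int k else if x = 0 then 7 + 8 * int k
      else if x = m - 2 then 8 + 8 * int k else if x = 2 then 9 + 8 * int k else 11 + 8 * int k))"

lemma pF5_blk:
  assumes "j < k" "r < 8"
  shows "pF5 k (3 + 8 * j + r) = (fst (B5 ! r) + 4 * int j, snd (B5 ! r))"
proof -
  have a: "(3 + 8 * j + r - 3) div 8 = j" "(3 + 8 * j + r - 3) mod 8 = r" using assms(2) by simp_all
  have "3 + 8 * j + r < 3 + 8 * k" using assms by linarith
  then show ?thesis unfolding pF5_def a by simp
qed

lemma pF5_suf: "pF5 k (3 + 8 * k + s) = (fst (S5 ! s) + 4 * int k, snd (S5 ! s))"
  unfolding pF5_def by simp

lemma pF5_decomp: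
  fixes i k :: nat
  assumes "i < 12 + 8 * k"
  shows "i < 3 \<or> (\<exists>j r. j < k \<and> r < 8 \<and> i = 3 + 8 * j + r) \<or> (\<exists>s. s < 9 \<and> i = 3 + 8 * k + s)"
proof (cases "i < 3")
  case True then show ?thesis by simp
next
  case False
  show ?thesis
  proof (cases "i < 3 + 8 * k")
    case True
    define j where "j = (i - 3) div 8"
    define r where "r = (i - 3) mod 8"
    have "i = 3 + 8 * j + r" unfolding j_def r_def using False by simp
    moreover have "r < 8" unfolding r_def by simp
    moreover have "j < k" unfolding j_def using True False by (simp add: less_mult_imp_div_less)
    ultimately show ?thesis by blast
  next
    case F2: False
    then have "i - 3 - 8 * k < 9" "i = 3 + 8 * k + (i - 3 - 8 * k)" using assms False by simp_all
    then show ?thesis by blast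
  qed
qed


lemma pF5_b0: "j < k \<Longrightarrow> pF5 k (3 + 8 * j + 0) = (4 + 4 * int j, 3)"
  using pF5_blk[of j k 0] by (simp add: B5_def)

lemma pF5_b1: "j < k \<Longrightarrow> pF5 k (3 + 8 * j + 1) = (6 + 4 * int j, 4)"
  using pF5_blk[of j k 1] by (simp add: B5_def)

lemma pF5_b2: "j < k \<Longrightarrow> pF5 k (3 + 8 * j + 2) = (5 + 4 * int j, 2)"
  using pF5_blk[of j k 2] by (simp add: B5_def)

lemma pF5_b3: "j < k \<Longrightarrow> pF5 k (3 + 8 * j + 3) = (3 + 4 * int j, 1)"
  using pF5_blk[of j k 3] by (simp add: B5_def)

lemma pF5_b4: "j < k \<Longrightarrow> pF5 k (3 + 8 * j + 4) = (5 + 4 * int j, 0)"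
  using pF5_blk[of j k 4] by (simp add: B5_def)

lemma pF5_b5: "j < k \<Longrightarrow> pF5 k (3 + 8 * j + 5) = (3 + 4 * int j, (-1))"
  using pF5_blk[of j k 5] by (simp add: B5_def)

lemma pF5_b6: "j < k \<Longrightarrow> pF5 k (3 + 8 * j + 6) = (4 + 4 * int j, 1)"
  using pF5_blk[of j k 6] by (simp add: B5_def)

lemma pF5_b7: "j < k \<Longrightarrow> pF5 k (3 + 8 * j + 7) = (6 + 4 * int j, 2)"
  using pF5_blk[of j k 7] by (simp add: B5_def)

lemma pF5_s0: "pF5 k (3 + 8 * k + 0) = (4 + 4 * int k, 3)"
  using pF5_suf[of k 0] by (simp add: S5_def)

lemma pF5_s1: "pF5 k (3 + 8 * k + 1) = (5 + 4 * int k, 1)"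
  using pF5_suf[of k 1] by (simp add: S5_def)

lemma pF5_s2: "pF5 k (3 + 8 * k + 2) = (7 + 4 * int k, 0)"
  using pF5_suf[of k 2] by (simp add: S5_def)

lemma pF5_s3: "pF5 k (3 + 8 * k + 3) = (8 + 4 * int k, 2)"
  using pF5_suf[of k 3] by (simp add: S5_def)

lemma pF5_s4: "pF5 k (3 + 8 * k + 4) = (6 + 4 * int k, 1)"
  using pF5_suf[of k 4] by (simp add: S5_def)

lemma pF5_s5: "pF5 k (3 + 8 * k + 5) = (7 + 4 * int k, (-1))"
  using pF5_suf[of k 5] by (simp add: S5_def)

lemma pF5_s6: "pF5 k (3 + 8 * k + 6) = (8 + 4 * int k, (-3))"
  using pF5_suf[of k 6] by (simp add: S5_def)

lemma pF5_s7: "pF5 k (3 + 8 * k + 7) = (6 + 4 * int k, (-2))"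
  using pF5_suf[of k 7] by (simp add: S5_def)

lemma pF5_s8: "pF5 k (3 + 8 * k + 8) = (8 + 4 * int k, (-1))"
  using pF5_suf[of k 8] by (simp add: S5_def)

lemma pF5_s9: "pF5 k (3 + 8 * k + 9) = (6 + 4 * int k, 0)"
  using pF5_suf[of k 9] by (simp add: S5_def)

lemma pF5_p0: "pF5 k 0 = (0, 0)"
  unfolding pF5_def by (simp add: P5_def)

lemma pF5_p1: "pF5 k 1 = (1, 2)"
  unfolding pF5_def by (simp add: P5_def)

lemma pF5_p2: "pF5 k 2 = (2, 4)"
  unfolding pF5_def by (simp add: P5_def)

lemma kcF5_b0: "m = 6 + 4 * int k \<Longrightarrow> j < k \<Longrightarrow> kc m 2 (4 + 4 * int j, 3) = ((1 + 4 * int k - 4 * int j), 1)"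
  by (rule kc2I[where d = "1" and c = "0"]) (simp_all add: algebra_simps)

lemma kcF5_b1: "m = 6 + 4 * int k \<Longrightarrow> j < k \<Longrightarrow> kc m 2 (6 + 4 * int j, 4) = ((6 + 4 * int j), 0)"
  by (rule kc2I[where d = "2" and c = "0"]) (simp_all add: algebra_simps)

lemma kcF5_b2: "m = 6 + 4 * int k \<Longrightarrow> j < k \<Longrightarrow> kc m 2 (5 + 4 * int j, 2) = ((0 + 4 * int k - 4 * int j), 0)"
  by (rule kc2I[where d = "1" and c = "0"]) (simp_all add: algebra_simps)

lemma kcF5_b3: "m = 6 + 4 * int k \<Longrightarrow> j < k \<Longrightarrow> kc m 2 (3 + 4 * int j, 1) = ((3 + 4 * int j), 1)"
  by (rule kc2I[where d = "0" and c = "0"]) (simp_all add: algebra_simps)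

lemma kcF5_b4: "m = 6 + 4 * int k \<Longrightarrow> j < k \<Longrightarrow> kc m 2 (5 + 4 * int j, 0) = ((5 + 4 * int j), 0)"
  by (rule kc2I[where d = "0" and c = "0"]) (simp_all add: algebra_simps)

lemma kcF5_b5: "m = 6 + 4 * int k \<Longrightarrow> j < k \<Longrightarrow> kc m 2 (3 + 4 * int j, (-1)) = ((2 + 4 * int k - 4 * int j), 1)"
  by (rule kc2I[where d = "-1" and c = "0"]) (simp_all add: algebra_simps)

lemma kcF5_b6: "m = 6 + 4 * int k \<Longrightarrow> j < k \<Longrightarrow> kc m 2 (4 + 4 * int j, 1) = ((4 + 4 * int j), 1)"
  by (rule kc2I[where d = "0" and c = "0"]) (simp_all add: algebra_simps)

lemma kcF5_b7: "m = 6 + 4 * int k \<Longrightarrow> j < k \<Longrightarrow> kc m 2 (6 + 4 * int j, 2) = ((- 1 + 4 * int k - 4 * int j), 0)"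
  by (rule kc2I[where d = "1" and c = "0"]) (simp_all add: algebra_simps)

lemma kcF5_s0: "m = 6 + 4 * int k \<Longrightarrow> kc m 2 (4 + 4 * int k, 3) = ((1), 1)"
  by (rule kc2I[where d = "1" and c = "0"]) (simp_all add: algebra_simps)

lemma kcF5_s1: "m = 6 + 4 * int k \<Longrightarrow> kc m 2 (5 + 4 * int k, 1) = ((5 + 4 * int k), 1)"
  by (rule kc2I[where d = "0" and c = "0"]) (simp_all add: algebra_simps)

lemma kcF5_s2: "m = 6 + 4 * int k \<Longrightarrow> kc m 2 (7 + 4 * int k, 0) = ((1), 0)"
  by (rule kc2I[where d = "0" and c = "1"]) (simp_all add: algebra_simps)

lemma kcF5_s3: "m = 6 + 4 * int k \<Longrightarrow> kc m 2 (8 + 4 * int k, 2) = ((3 + 4 * int k), 0)"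
  by (rule kc2I[where d = "1" and c = "-1"]) (simp_all add: algebra_simps)

lemma kcF5_s4: "m = 6 + 4 * int k \<Longrightarrow> kc m 2 (6 + 4 * int k, 1) = ((0), 1)"
  by (rule kc2I[where d = "0" and c = "1"]) (simp_all add: algebra_simps)

lemma kcF5_s5: "m = 6 + 4 * int k \<Longrightarrow> kc m 2 (7 + 4 * int k, (-1)) = ((4 + 4 * int k), 1)"
  by (rule kc2I[where d = "-1" and c = "-1"]) (simp_all add: algebra_simps)

lemma kcF5_s6: "m = 6 + 4 * int k \<Longrightarrow> kc m 2 (8 + 4 * int k, (-3)) = ((2), 1)"
  by (rule kc2I[where d = "-2" and c = "1"]) (simp_all add: algebra_simps)

lemma kcF5_s7: "m = 6 + 4 * int k \<Longrightarrow> kc m 2 (6 + 4 * int k, (-2)) = ((5 + 4 * int k), 0)"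
  by (rule kc2I[where d = "-1" and c = "-1"]) (simp_all add: algebra_simps)

lemma kcF5_s8: "m = 6 + 4 * int k \<Longrightarrow> kc m 2 (8 + 4 * int k, (-1)) = ((3 + 4 * int k), 1)"
  by (rule kc2I[where d = "-1" and c = "-1"]) (simp_all add: algebra_simps)

lemma kcF5_p0: "m = 6 + 4 * int k \<Longrightarrow> kc m 2 (0, 0) = ((0), 0)"
  by (rule kc2I[where d = "0" and c = "0"]) (simp_all add: algebra_simps)

lemma kcF5_p1: "m = 6 + 4 * int k \<Longrightarrow> kc m 2 (1, 2) = ((4 + 4 * int k), 0)"
  by (rule kc2I[where d = "1" and c = "0"]) (simp_all add: algebra_simps)

lemma kcF5_p2: "m = 6 + 4 * int k \<Longrightarrow> kc m 2 (2, 4) = ((2), 0)"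
  by (rule kc2I[where d = "2" and c = "0"]) (simp_all add: algebra_simps)

lemma idxF5_b0: "j < k \<Longrightarrow> idxF5 k ((1 + 4 * int k - 4 * int j), 1) = int (3 + 8 * j + 0)"
proof -
  assume jk: "j < k"
  have h1: "3 \<le> (1 + 4 * int k - 4 * int j) \<and> (1 + 4 * int k - 4 * int j) \<le> 6 + 4 * int k - 4" using jk by linarith
  have h3: "(1 + 4 * int k - 4 * int j) mod 4 = 1" by presburger
  have h4: "(6 + 4 * int k - 5 - (1 + 4 * int k - 4 * int j)) div 4 = int j" by (simp add: algebra_simps)
  show ?thesis unfolding idxF5_def Let_def fst_conv snd_conv h3 h4 using h1 by simp
qed

lemma idxF5_b1: "j < k \<Longrightarrow> idxF5 k ((6 + 4 * int j), 0) = int (3 + 8 * j + 1)"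
proof -
  assume jk: "j < k"
  have h1: "3 \<le> (6 + 4 * int j) \<and> (6 + 4 * int j) \<le> 6 + 4 * int k - 4" using jk by linarith
  have h3: "(6 + 4 * int j) mod 4 = 2" by presburger
  have h4: "((6 + 4 * int j) - 6) div 4 = int j" by (simp add: algebra_simps)
  show ?thesis unfolding idxF5_def Let_def fst_conv snd_conv h3 h4 using h1 by simp
qed

lemma idxF5_b2: "j < k \<Longrightarrow> idxF5 k ((0 + 4 * int k - 4 * int j), 0) = int (3 + 8 * j + 2)"
proof -
  assume jk: "j < k"
  have h1: "3 \<le> (0 + 4 * int k - 4 * int j) \<and> (0 + 4 * int k - 4 * int j) \<le> 6 + 4 * int k - 4" using jk by linarith
  have h3: "(0 + 4 * int k - 4 * int j) mod 4 = 0" by presburger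
  have h4: "(6 + 4 * int k - 6 - (0 + 4 * int k - 4 * int j)) div 4 = int j" by (simp add: algebra_simps)
  show ?thesis unfolding idxF5_def Let_def fst_conv snd_conv h3 h4 using h1 by simp
qed

lemma idxF5_b3: "j < k \<Longrightarrow> idxF5 k ((3 + 4 * int j), 1) = int (3 + 8 * j + 3)"
proof -
  assume jk: "j < k"
  have h1: "3 \<le> (3 + 4 * int j) \<and> (3 + 4 * int j) \<le> 6 + 4 * int k - 4" using jk by linarith
  have h3: "(3 + 4 * int j) mod 4 = 3" by presburger
  have h4: "((3 + 4 * int j) - 3) div 4 = int j" by (simp add: algebra_simps)
  show ?thesis unfolding idxF5_def Let_def fst_conv snd_conv h3 h4 using h1 by simp
qed

lemma idxF5_b4: "j < k \<Longrightarrow> idxF5 k ((5 + 4 * int j), 0) = int (3 + 8 * j + 4)"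
proof -
  assume jk: "j < k"
  have h1: "3 \<le> (5 + 4 * int j) \<and> (5 + 4 * int j) \<le> 6 + 4 * int k - 4" using jk by linarith
  have h3: "(5 + 4 * int j) mod 4 = 1" by presburger
  have h4: "((5 + 4 * int j) - 5) div 4 = int j" by (simp add: algebra_simps)
  show ?thesis unfolding idxF5_def Let_def fst_conv snd_conv h3 h4 using h1 by simp
qed

lemma idxF5_b5: "j < k \<Longrightarrow> idxF5 k ((2 + 4 * int k - 4 * int j), 1) = int (3 + 8 * j + 5)"
proof -
  assume jk: "j < k"
  have h1: "3 \<le> (2 + 4 * int k - 4 * int j) \<and> (2 + 4 * int k - 4 * int j) \<le> 6 + 4 * int k - 4" using jk by linarith
  have h3: "(2 + 4 * int k - 4 * int j) mod 4 = 2" by presburger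
  have h4: "(6 + 4 * int k - 4 - (2 + 4 * int k - 4 * int j)) div 4 = int j" by (simp add: algebra_simps)
  show ?thesis unfolding idxF5_def Let_def fst_conv snd_conv h3 h4 using h1 by simp
qed

lemma idxF5_b6: "j < k \<Longrightarrow> idxF5 k ((4 + 4 * int j), 1) = int (3 + 8 * j + 6)"
proof -
  assume jk: "j < k"
  have h1: "3 \<le> (4 + 4 * int j) \<and> (4 + 4 * int j) \<le> 6 + 4 * int k - 4" using jk by linarith
  have h3: "(4 + 4 * int j) mod 4 = 0" by presburger
  have h4: "((4 + 4 * int j) - 4) div 4 = int j" by (simp add: algebra_simps)
  show ?thesis unfolding idxF5_def Let_def fst_conv snd_conv h3 h4 using h1 by simp
qed

lemma idxF5_b7: "j < k \<Longrightarrow> idxF5 k ((- 1 + 4 * int k - 4 * int j), 0) = int (3 + 8 * j + 7)"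
proof -
  assume jk: "j < k"
  have h1: "3 \<le> (- 1 + 4 * int k - 4 * int j) \<and> (- 1 + 4 * int k - 4 * int j) \<le> 6 + 4 * int k - 4" using jk by linarith
  have h3: "(- 1 + 4 * int k - 4 * int j) mod 4 = 3" by presburger
  have h4: "(6 + 4 * int k - 7 - (- 1 + 4 * int k - 4 * int j)) div 4 = int j" by (simp add: algebra_simps)
  show ?thesis unfolding idxF5_def Let_def fst_conv snd_conv h3 h4 using h1 by simp
qed

lemma idxF5_s0: "idxF5 k ((1), 1) = int (3 + 8 * k + 0)"
proof -
  have h1: "\<not> ((3::int) \<le> (1) \<and> (1) \<le> 6 + 4 * int k - 4)" by linarith
  show ?thesis unfolding idxF5_def Let_def fst_conv snd_conv using h1 by simp
qed

lemma idxF5_s1: "idxF5 k ((5 + 4 * int k), 1) = int (3 + 8 * k + 1)"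
proof -
  have h1: "\<not> ((3::int) \<le> (5 + 4 * int k) \<and> (5 + 4 * int k) \<le> 6 + 4 * int k - 4)" by linarith
  show ?thesis unfolding idxF5_def Let_def fst_conv snd_conv using h1 by simp
qed

lemma idxF5_s2: "idxF5 k ((1), 0) = int (3 + 8 * k + 2)"
proof -
  have h1: "\<not> ((3::int) \<le> (1) \<and> (1) \<le> 6 + 4 * int k - 4)" by linarith
  show ?thesis unfolding idxF5_def Let_def fst_conv snd_conv using h1 by simp
qed

lemma idxF5_s3: "idxF5 k ((3 + 4 * int k), 0) = int (3 + 8 * k + 3)"
proof -
  have h1: "\<not> ((3::int) \<le> (3 + 4 * int k) \<and> (3 + 4 * int k) \<le> 6 + 4 * int k - 4)" by linarith
  show ?thesis unfolding idxF5_def Let_def fst_conv snd_conv using h1 by simp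
qed

lemma idxF5_s4: "idxF5 k ((0), 1) = int (3 + 8 * k + 4)"
proof -
  have h1: "\<not> ((3::int) \<le> (0) \<and> (0) \<le> 6 + 4 * int k - 4)" by linarith
  show ?thesis unfolding idxF5_def Let_def fst_conv snd_conv using h1 by simp
qed

lemma idxF5_s5: "idxF5 k ((4 + 4 * int k), 1) = int (3 + 8 * k + 5)"
proof -
  have h1: "\<not> ((3::int) \<le> (4 + 4 * int k) \<and> (4 + 4 * int k) \<le> 6 + 4 * int k - 4)" by linarith
  show ?thesis unfolding idxF5_def Let_def fst_conv snd_conv using h1 by simp
qed

lemma idxF5_s6: "idxF5 k ((2), 1) = int (3 + 8 * k + 6)"
proof -
  have h1: "\<not> ((3::int) \<le> (2) \<and> (2) \<le> 6 + 4 * int k - 4)" by linarith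
  show ?thesis unfolding idxF5_def Let_def fst_conv snd_conv using h1 by simp
qed

lemma idxF5_s7: "idxF5 k ((5 + 4 * int k), 0) = int (3 + 8 * k + 7)"
proof -
  have h1: "\<not> ((3::int) \<le> (5 + 4 * int k) \<and> (5 + 4 * int k) \<le> 6 + 4 * int k - 4)" by linarith
  show ?thesis unfolding idxF5_def Let_def fst_conv snd_conv using h1 by simp
qed

lemma idxF5_s8: "idxF5 k ((3 + 4 * int k), 1) = int (3 + 8 * k + 8)"
proof -
  have h1: "\<not> ((3::int) \<le> (3 + 4 * int k) \<and> (3 + 4 * int k) \<le> 6 + 4 * int k - 4)" by linarith
  show ?thesis unfolding idxF5_def Let_def fst_conv snd_conv using h1 by simp
qed

lemma idxF5_p0: "idxF5 k ((0), 0) = 0"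
proof -
  have h1: "\<not> ((3::int) \<le> (0) \<and> (0) \<le> 6 + 4 * int k - 4)" by linarith
  show ?thesis unfolding idxF5_def Let_def fst_conv snd_conv using h1 by simp
qed

lemma idxF5_p1: "idxF5 k ((4 + 4 * int k), 0) = 1"
proof -
  have h1: "\<not> ((3::int) \<le> (4 + 4 * int k) \<and> (4 + 4 * int k) \<le> 6 + 4 * int k - 4)" by linarith
  show ?thesis unfolding idxF5_def Let_def fst_conv snd_conv using h1 by simp
qed

lemma idxF5_p2: "idxF5 k ((2), 0) = 2"
proof -
  have h1: "\<not> ((3::int) \<le> (2) \<and> (2) \<le> 6 + 4 * int k - 4)" by linarith
  show ?thesis unfolding idxF5_def Let_def fst_conv snd_conv using h1 by simp
qed

lemma less8: "(r::nat) < 8 \<Longrightarrow> r = 0 \<or> r = 1 \<or> r = 2 \<or> r = 3 \<or> r = 4 \<or> r = 5 \<or> r = 6 \<or> r = 7"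
  by (simp add: less_Suc_eq numeral_eq_Suc)

lemma less9: "(r::nat) < 9 \<Longrightarrow> r = 0 \<or> r = 1 \<or> r = 2 \<or> r = 3 \<or> r = 4 \<or> r = 5 \<or> r = 6 \<or> r = 7 \<or> r = 8"
  by (simp add: less_Suc_eq numeral_eq_Suc)

lemma chainF5: "pF5 k i = P \<Longrightarrow> kc m 2 P = V \<Longrightarrow> idxF5 k V = int i \<Longrightarrow> idxF5 k (kc m 2 (pF5 k i)) = int i"
  by simp

lemma chainF5': "pF5 k i = P \<Longrightarrow> kc m 2 P = V \<Longrightarrow> idxF5 k V = c \<Longrightarrow> c = int i \<Longrightarrow> idxF5 k (kc m 2 (pF5 k i)) = int i"
  by simp

lemma F5_start: "j \<le> k \<Longrightarrow> pF5 k (3 + 8 * j) = (4 + 4 * int j, 3)"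
proof -
  assume "j \<le> k"
  then consider "j < k" | "j = k" by linarith
  then show ?thesis
  proof cases
    case 1 then show ?thesis using pF5_b0[of j k] by simp
  next
    case 2 then show ?thesis using pF5_s0[of k] by simp
  qed
qed


lemma F5_idx:
  assumes m: "m = 6 + 4 * int k" and i: "i < 12 + 8 * k"
  shows "idxF5 k (kc m 2 (pF5 k i)) = int i"
proof -
  consider "i < 3" | "\<exists>j r. j < k \<and> r < 8 \<and> i = 3 + 8 * j + r" | "\<exists>s. s < 9 \<and> i = 3 + 8 * k + s"
    using pF5_decomp[OF i] by blast
  then show ?thesis
  proof cases
    case 1
    then consider "i = 0" | "i = 1" | "i = 2" by linarith
    then show ?thesis
    proof cases
      case 1
      have "idxF5 k (kc m 2 (pF5 k 0)) = int 0" by (rule chainF5'[OF pF5_p0 kcF5_p0[OF m] idxF5_p0]) simp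
      then show ?thesis using 1 by simp
    next
      case 2
      have "idxF5 k (kc m 2 (pF5 k 1)) = int 1" by (rule chainF5'[OF pF5_p1 kcF5_p1[OF m] idxF5_p1]) simp
      then show ?thesis using 2 by simp
    next
      case 3
      have "idxF5 k (kc m 2 (pF5 k 2)) = int 2" by (rule chainF5'[OF pF5_p2 kcF5_p2[OF m] idxF5_p2]) simp
      then show ?thesis using 3 by simp
    qed
  next
    case 2
    then obtain j r where jr: "j < k" "r < 8" "i = 3 + 8 * j + r" by blast
    consider "r = 0" | "r = 1" | "r = 2" | "r = 3" | "r = 4" | "r = 5" | "r = 6" | "r = 7" using less8[OF jr(2)] by blast
    then show ?thesis
    proof cases
      case 1
      have "idxF5 k (kc m 2 (pF5 k (3 + 8 * j + 0))) = int (3 + 8 * j + 0)"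
        by (rule chainF5[OF pF5_b0[OF jr(1)] kcF5_b0[OF m jr(1)] idxF5_b0[OF jr(1)]])
      then show ?thesis using 1 jr(3) by simp
    next
      case 2
      have "idxF5 k (kc m 2 (pF5 k (3 + 8 * j + 1))) = int (3 + 8 * j + 1)"
        by (rule chainF5[OF pF5_b1[OF jr(1)] kcF5_b1[OF m jr(1)] idxF5_b1[OF jr(1)]])
      then show ?thesis using 2 jr(3) by simp
    next
      case 3
      have "idxF5 k (kc m 2 (pF5 k (3 + 8 * j + 2))) = int (3 + 8 * j + 2)"
        by (rule chainF5[OF pF5_b2[OF jr(1)] kcF5_b2[OF m jr(1)] idxF5_b2[OF jr(1)]])
      then show ?thesis using 3 jr(3) by simp
    next
      case 4
      have "idxF5 k (kc m 2 (pF5 k (3 + 8 * j + 3))) = int (3 + 8 * j + 3)"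
        by (rule chainF5[OF pF5_b3[OF jr(1)] kcF5_b3[OF m jr(1)] idxF5_b3[OF jr(1)]])
      then show ?thesis using 4 jr(3) by simp
    next
      case 5
      have "idxF5 k (kc m 2 (pF5 k (3 + 8 * j + 4))) = int (3 + 8 * j + 4)"
        by (rule chainF5[OF pF5_b4[OF jr(1)] kcF5_b4[OF m jr(1)] idxF5_b4[OF jr(1)]])
      then show ?thesis using 5 jr(3) by simp
    next
      case 6
      have "idxF5 k (kc m 2 (pF5 k (3 + 8 * j + 5))) = int (3 + 8 * j + 5)"
        by (rule chainF5[OF pF5_b5[OF jr(1)] kcF5_b5[OF m jr(1)] idxF5_b5[OF jr(1)]])
      then show ?thesis using 6 jr(3) by simp
    next
      case 7
      have "idxF5 k (kc m 2 (pF5 k (3 + 8 * j + 6))) = int (3 + 8 * j + 6)"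
        by (rule chainF5[OF pF5_b6[OF jr(1)] kcF5_b6[OF m jr(1)] idxF5_b6[OF jr(1)]])
      then show ?thesis using 7 jr(3) by simp
    next
      case 8
      have "idxF5 k (kc m 2 (pF5 k (3 + 8 * j + 7))) = int (3 + 8 * j + 7)"
        by (rule chainF5[OF pF5_b7[OF jr(1)] kcF5_b7[OF m jr(1)] idxF5_b7[OF jr(1)]])
      then show ?thesis using 8 jr(3) by simp
    qed
  next
    case 3
    then obtain s where s: "s < 9" "i = 3 + 8 * k + s" by blast
    consider "s = 0" | "s = 1" | "s = 2" | "s = 3" | "s = 4" | "s = 5" | "s = 6" | "s = 7" | "s = 8" using less9[OF s(1)] by blast
    then show ?thesis
    proof cases
      case 1
      have "idxF5 k (kc m 2 (pF5 k (3 + 8 * k + 0))) = int (3 + 8 * k + 0)"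
        by (rule chainF5[OF pF5_s0 kcF5_s0[OF m] idxF5_s0])
      then show ?thesis using 1 s(2) by simp
    next
      case 2
      have "idxF5 k (kc m 2 (pF5 k (3 + 8 * k + 1))) = int (3 + 8 * k + 1)"
        by (rule chainF5[OF pF5_s1 kcF5_s1[OF m] idxF5_s1])
      then show ?thesis using 2 s(2) by simp
    next
      case 3
      have "idxF5 k (kc m 2 (pF5 k (3 + 8 * k + 2))) = int (3 + 8 * k + 2)"
        by (rule chainF5[OF pF5_s2 kcF5_s2[OF m] idxF5_s2])
      then show ?thesis using 3 s(2) by simp
    next
      case 4
      have "idxF5 k (kc m 2 (pF5 k (3 + 8 * k + 3))) = int (3 + 8 * k + 3)"
        by (rule chainF5[OF pF5_s3 kcF5_s3[OF m] idxF5_s3])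
      then show ?thesis using 4 s(2) by simp
    next
      case 5
      have "idxF5 k (kc m 2 (pF5 k (3 + 8 * k + 4))) = int (3 + 8 * k + 4)"
        by (rule chainF5[OF pF5_s4 kcF5_s4[OF m] idxF5_s4])
      then show ?thesis using 5 s(2) by simp
    next
      case 6
      have "idxF5 k (kc m 2 (pF5 k (3 + 8 * k + 5))) = int (3 + 8 * k + 5)"
        by (rule chainF5[OF pF5_s5 kcF5_s5[OF m] idxF5_s5])
      then show ?thesis using 6 s(2) by simp
    next
      case 7
      have "idxF5 k (kc m 2 (pF5 k (3 + 8 * k + 6))) = int (3 + 8 * k + 6)"
        by (rule chainF5[OF pF5_s6 kcF5_s6[OF m] idxF5_s6])
      then show ?thesis using 7 s(2) by simp
    next
      case 8
      have "idxF5 k (kc m 2 (pF5 k (3 + 8 * k + 7))) = int (3 + 8 * k + 7)"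
        by (rule chainF5[OF pF5_s7 kcF5_s7[OF m] idxF5_s7])
      then show ?thesis using 8 s(2) by simp
    next
      case 9
      have "idxF5 k (kc m 2 (pF5 k (3 + 8 * k + 8))) = int (3 + 8 * k + 8)"
        by (rule chainF5[OF pF5_s8 kcF5_s8[OF m] idxF5_s8])
      then show ?thesis using 9 s(2) by simp
    qed
  qed
qed



lemma F5_adj:
  assumes i: "i < 12 + 8 * k"
  shows "knight_adj (pF5 k i) (pF5 k (Suc i))"
proof -
  consider "i < 3" | "\<exists>j r. j < k \<and> r < 8 \<and> i = 3 + 8 * j + r" | "\<exists>s. s < 9 \<and> i = 3 + 8 * k + s"
    using pF5_decomp[OF i] by blast
  then show ?thesis
  proof cases
    case 1
    then consider "i = 0" | "i = 1" | "i = 2" by linarith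
    then show ?thesis
    proof cases
      case 1 then show ?thesis using pF5_p0[of k] pF5_p1[of k] by (simp add: knight_adj_cases)
    next
      case 2
      then have e: "i = 1" "Suc i = 2" by simp_all
      show ?thesis unfolding e(2) unfolding e(1) pF5_p1 pF5_p2 by (simp add: knight_adj_cases)
    next
      case 3
      have "pF5 k 3 = (4, 3)" using F5_start[of 0 k] by simp
      then show ?thesis using 3 pF5_p2[of k] by (simp add: knight_adj_cases)
    qed
  next
    case 2
    then obtain j r where jr: "j < k" "r < 8" "i = 3 + 8 * j + r" by blast
    consider "r = 0" | "r = 1" | "r = 2" | "r = 3" | "r = 4" | "r = 5" | "r = 6" | "r = 7" using less8[OF jr(2)] by blast
    then show ?thesis
    proof cases
      case 1
      have e: "Suc i = 3 + 8 * j + 1" "i = 3 + 8 * j + 0" using 1 jr(3) by simp_all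
      show ?thesis unfolding e(1) unfolding e(2) pF5_b0[OF jr(1)] pF5_b1[OF jr(1)] by (simp add: knight_adj_cases)
    next
      case 2
      have e: "Suc i = 3 + 8 * j + 2" "i = 3 + 8 * j + 1" using 2 jr(3) by simp_all
      show ?thesis unfolding e(1) unfolding e(2) pF5_b1[OF jr(1)] pF5_b2[OF jr(1)] by (simp add: knight_adj_cases)
    next
      case 3
      have e: "Suc i = 3 + 8 * j + 3" "i = 3 + 8 * j + 2" using 3 jr(3) by simp_all
      show ?thesis unfolding e(1) unfolding e(2) pF5_b2[OF jr(1)] pF5_b3[OF jr(1)] by (simp add: knight_adj_cases)
    next
      case 4
      have e: "Suc i = 3 + 8 * j + 4" "i = 3 + 8 * j + 3" using 4 jr(3) by simp_all
      show ?thesis unfolding e(1) unfolding e(2) pF5_b3[OF jr(1)] pF5_b4[OF jr(1)] by (simp add: knight_adj_cases)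
    next
      case 5
      have e: "Suc i = 3 + 8 * j + 5" "i = 3 + 8 * j + 4" using 5 jr(3) by simp_all
      show ?thesis unfolding e(1) unfolding e(2) pF5_b4[OF jr(1)] pF5_b5[OF jr(1)] by (simp add: knight_adj_cases)
    next
      case 6
      have e: "Suc i = 3 + 8 * j + 6" "i = 3 + 8 * j + 5" using 6 jr(3) by simp_all
      show ?thesis unfolding e(1) unfolding e(2) pF5_b5[OF jr(1)] pF5_b6[OF jr(1)] by (simp add: knight_adj_cases)
    next
      case 7
      have e: "Suc i = 3 + 8 * j + 7" "i = 3 + 8 * j + 6" using 7 jr(3) by simp_all
      show ?thesis unfolding e(1) unfolding e(2) pF5_b6[OF jr(1)] pF5_b7[OF jr(1)] by (simp add: knight_adj_cases)
    next
      case 8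
      have e: "Suc i = 3 + 8 * (j + 1)" "i = 3 + 8 * j + 7" using 8 jr(3) by simp_all
      have "pF5 k (3 + 8 * (j + 1)) = (4 + 4 * int (j + 1), 3)" using jr(1) by (intro F5_start) simp
      then show ?thesis unfolding e(1) unfolding e(2) pF5_b7[OF jr(1)] by (simp add: knight_adj_cases)
    qed
  next
    case 3
    then obtain s where s: "s < 9" "i = 3 + 8 * k + s" by blast
    consider "s = 0" | "s = 1" | "s = 2" | "s = 3" | "s = 4" | "s = 5" | "s = 6" | "s = 7" | "s = 8" using less9[OF s(1)] by blast
    then show ?thesis
    proof cases
      case 1
      have e: "Suc i = 3 + 8 * k + 1" "i = 3 + 8 * k + 0" using 1 s(2) by simp_all
      show ?thesis unfolding e(1) unfolding e(2) pF5_s0 pF5_s1 by (simp add: knight_adj_cases)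
    next
      case 2
      have e: "Suc i = 3 + 8 * k + 2" "i = 3 + 8 * k + 1" using 2 s(2) by simp_all
      show ?thesis unfolding e(1) unfolding e(2) pF5_s1 pF5_s2 by (simp add: knight_adj_cases)
    next
      case 3
      have e: "Suc i = 3 + 8 * k + 3" "i = 3 + 8 * k + 2" using 3 s(2) by simp_all
      show ?thesis unfolding e(1) unfolding e(2) pF5_s2 pF5_s3 by (simp add: knight_adj_cases)
    next
      case 4
      have e: "Suc i = 3 + 8 * k + 4" "i = 3 + 8 * k + 3" using 4 s(2) by simp_all
      show ?thesis unfolding e(1) unfolding e(2) pF5_s3 pF5_s4 by (simp add: knight_adj_cases)
    next
      case 5
      have e: "Suc i = 3 + 8 * k + 5" "i = 3 + 8 * k + 4" using 5 s(2) by simp_all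
      show ?thesis unfolding e(1) unfolding e(2) pF5_s4 pF5_s5 by (simp add: knight_adj_cases)
    next
      case 6
      have e: "Suc i = 3 + 8 * k + 6" "i = 3 + 8 * k + 5" using 6 s(2) by simp_all
      show ?thesis unfolding e(1) unfolding e(2) pF5_s5 pF5_s6 by (simp add: knight_adj_cases)
    next
      case 7
      have e: "Suc i = 3 + 8 * k + 7" "i = 3 + 8 * k + 6" using 7 s(2) by simp_all
      show ?thesis unfolding e(1) unfolding e(2) pF5_s6 pF5_s7 by (simp add: knight_adj_cases)
    next
      case 8
      have e: "Suc i = 3 + 8 * k + 8" "i = 3 + 8 * k + 7" using 8 s(2) by simp_all
      show ?thesis unfolding e(1) unfolding e(2) pF5_s7 pF5_s8 by (simp add: knight_adj_cases)
    next
      case 9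
      have e: "Suc i = 3 + 8 * k + 9" "i = 3 + 8 * k + 8" using 9 s(2) by simp_all
      show ?thesis unfolding e(1) unfolding e(2) pF5_s8 pF5_s9 by (simp add: knight_adj_cases)
    qed
  qed
qed

lemma F5_tour:
  assumes m: "m = 6 + 4 * int k"
  shows "\<exists>p N. kb_cylindrical_tour m 2 p N"
proof -
  have "kb_cylindrical_tour m 2 (pF5 k) (12 + 8 * k)"
  proof (rule tour_intro)
    show "0 < m" "0 < (2::int)" using m by auto
    show "int (12 + 8 * k) = m * 2" using m by simp
    show "3 \<le> 12 + 8 * k" by simp
    show "pF5 k 0 = (0, 0)" by (rule pF5_p0)
    show "\<forall>i<12 + 8 * k. knight_adj (pF5 k i) (pF5 k (Suc i))" using F5_adj by blast
    have "pF5 k (12 + 8 * k) = (m, 0)" using pF5_s9[of k] m by simp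
    then show "pF5 k (12 + 8 * k) = (m, 0) \<or> pF5 k (12 + 8 * k) = (- m, 0)" by blast
    show "inj_on (kc m 2 \<circ> pF5 k) {..<12 + 8 * k}"
    proof (rule inj_onI)
      fix i j assume ij: "i \<in> {..<12 + 8 * k}" "j \<in> {..<12 + 8 * k}" and e: "(kc m 2 \<circ> pF5 k) i = (kc m 2 \<circ> pF5 k) j"
      have e2: "kc m 2 (pF5 k i) = kc m 2 (pF5 k j)" using e by simp
      have "int i = idxF5 k (kc m 2 (pF5 k i))" using F5_idx[OF m, of i] ij(1) by simp
      also have "\<dots> = idxF5 k (kc m 2 (pF5 k j))" unfolding e2 ..
      also have "\<dots> = int j" using F5_idx[OF m, of j] ij(2) by simp
      finally show "i = j" by simp
    qed
  qed
  then show ?thesis by blast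
qed



definition B21 :: "(int \<times> int) list" where
  "B21 = [(0,0),(1,2),(2,0)]"

lemma B21_tour:
  assumes K: "2 \<le> K"
  shows "\<exists>p N. kb_cylindrical_tour (int K * 2) 1 p N"
proof (rule stack_tour[where w = "wl B21" and L = 2])
  show "0 < (2::int)" "0 < (1::int)" "0 < K" using K by auto
  show "int 2 = 2 * 1" by simp
  show "wl B21 0 = (0, 0)" "wl B21 2 = (2, 0)" by (simp_all add: wl_def B21_def)
  have "\<forall>i\<in>{..<2}. knight_adj (wl B21 i) (wl B21 (Suc i))"
    unfolding lessThan_2 by (simp add: wl_def B21_def knight_adj_cases)
  then show "\<forall>i<2. knight_adj (wl B21 i) (wl B21 (Suc i))" by simp
  show "inj_on (kc 2 1 \<circ> wl B21) {..<2}"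
    unfolding inj_on_def lessThan_2 by (simp add: wl_def B21_def kc_def)
  show "3 \<le> K * 2" using K by simp
qed

lemma B42_tour:
  assumes K: "1 \<le> K"
  shows "\<exists>p N. kb_cylindrical_tour (int K * 4) 2 p N"
proof (rule stack_tour[where w = "wl B42" and L = 8])
  show "0 < (4::int)" "0 < (2::int)" "0 < K" using K by auto
  show "int 8 = 4 * 2" by simp
  show "wl B42 0 = (0, 0)" "wl B42 8 = (4, 0)" by (simp_all add: wl_def B42_def)
  show "\<forall>i<8. knight_adj (wl B42 i) (wl B42 (Suc i))" by (rule B42_adj)
  show "inj_on (kc 4 2 \<circ> wl B42) {..<8}" by (rule B42_inj)
  show "3 \<le> K * 8" using K by simp
qed

definition T31 :: "(int \<times> int) list" where
  "T31 = [(0,0),(-1,2),(1,1),(3,0)]"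

lemma T31_tour: "\<exists>p N. kb_cylindrical_tour 3 1 p N"
proof -
  have "kb_cylindrical_tour 3 1 (wl T31) 3"
  proof (rule tour_intro)
    show "0 < (3::int)" "0 < (1::int)" "int 3 = 3 * 1" "3 \<le> (3::nat)" by simp_all
    show "wl T31 0 = (0, 0)" by (simp add: wl_def T31_def)
    have "\<forall>i\<in>{..<3}. knight_adj (wl T31 i) (wl T31 (Suc i))"
      unfolding lessThan_3 by (simp add: wl_def T31_def knight_adj_cases)
    then show "\<forall>i<3. knight_adj (wl T31 i) (wl T31 (Suc i))" by simp
    show "wl T31 3 = (3, 0) \<or> wl T31 3 = (- 3, 0)" by (simp add: wl_def T31_def)
    show "inj_on (kc 3 1 \<circ> wl T31) {..<3}"
      unfolding inj_on_def lessThan_3 by (simp add: wl_def T31_def kc_def)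
  qed
  then show ?thesis by blast
qed

definition T51 :: "(int \<times> int) list" where
  "T51 = [(0,0),(-1,2),(1,3),(2,1),(3,-1),(5,0)]"

lemma T51_tour: "\<exists>p N. kb_cylindrical_tour 5 1 p N"
proof -
  have "kb_cylindrical_tour 5 1 (wl T51) 5"
  proof (rule tour_intro)
    show "0 < (5::int)" "0 < (1::int)" "int 5 = 5 * 1" "3 \<le> (5::nat)" by simp_all
    show "wl T51 0 = (0, 0)" by (simp add: wl_def T51_def)
    have "\<forall>i\<in>{..<5}. knight_adj (wl T51 i) (wl T51 (Suc i))"
      unfolding lessThan_5 by (simp add: wl_def T51_def knight_adj_cases)
    then show "\<forall>i<5. knight_adj (wl T51 i) (wl T51 (Suc i))" by simp
    show "wl T51 5 = (5, 0) \<or> wl T51 5 = (- 5, 0)" by (simp add: wl_def T51_def)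
    show "inj_on (kc 5 1 \<circ> wl T51) {..<5}"
      unfolding inj_on_def lessThan_5 by (simp add: wl_def T51_def kc_def)
  qed
  then show ?thesis by blast
qed

lemma T21_no_edge:
  "\<not> kb_same_edge 2 1 ((0, 0), (1, 2)) ((1, 2), (2, 0))"
  "\<not> kb_same_edge 2 1 ((1, 2), (2, 0)) ((0, 0), (1, 2))"
proof -
  show "\<not> kb_same_edge 2 1 ((0, 0), (1, 2)) ((1, 2), (2, 0))"
  proof
    assume "kb_same_edge 2 1 ((0, 0), (1, 2)) ((1, 2), (2, 0))"
    then obtain g where g: "g \<in> kbG 2 1" "{g (0, 0), g (1, 2)} = {(1, 2), (2, 0)}"
      unfolding kb_same_edge_def by auto
    obtain k c where f: "\<forall>a b. g (a, b) = (if even k then a + c else c - a, b + k * 1)"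
      using kbG_form[OF g(1)] by blast
    have g1: "g (0, 0) = (c, k)" and g2: "g (1, 2) = (if even k then 1 + c else c - 1, 2 + k)"
      using f by auto
    show False using g(2) unfolding g1 g2 by (auto simp: doubleton_eq_iff split: if_splits)
  qed
  show "\<not> kb_same_edge 2 1 ((1, 2), (2, 0)) ((0, 0), (1, 2))"
  proof
    assume "kb_same_edge 2 1 ((1, 2), (2, 0)) ((0, 0), (1, 2))"
    then obtain g where g: "g \<in> kbG 2 1" "{g (1, 2), g (2, 0)} = {(0, 0), (1, 2)}"
      unfolding kb_same_edge_def by auto
    obtain k c where f: "\<forall>a b. g (a, b) = (if even k then a + c else c - a, b + k * 1)"
      using kbG_form[OF g(1)] by blast
    have g1: "g (2, 0) = (if even k then 2 + c else c - 2, k)" and g2: "g (1, 2) = (if even k then 1 + c else c - 1, 2 + k)"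
      using f by auto
    show False using g(2) unfolding g1 g2 by (auto simp: doubleton_eq_iff split: if_splits)
  qed
qed

lemma T21_tour: "\<exists>p N. kb_cylindrical_tour 2 1 p N"
proof -
  let ?p = "wl B21"
  have k0: "kc 2 1 (?p 0) = (0, 0)" and k1: "kc 2 1 (?p 1) = (1, 0)"
    by (simp_all add: wl_def B21_def kc_def)
  have "kb_cylindrical_tour 2 1 ?p 2"
    unfolding kb_cylindrical_tour_def kb_knight_tour_def
  proof (intro conjI allI impI)
    show "?p 0 = (0, 0)" by (simp add: wl_def B21_def)
    show "\<And>i. i < 2 \<Longrightarrow> knight_adj (?p i) (?p (Suc i))"
    proof -
      fix i :: nat assume "i < 2"
      then have "i = 0 \<or> i = 1" by auto
      then show "knight_adj (?p i) (?p (Suc i))" by (auto simp: wl_def B21_def knight_adj_cases)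
    qed
    show "kb_same_vertex 2 1 (?p 0) (?p 2)" unfolding sv_iff_krel krel_def
      by (rule exI[of _ 0]) (simp add: wl_def B21_def)
    show "\<And>i j. i < 2 \<Longrightarrow> j < 2 \<Longrightarrow> i \<noteq> j \<Longrightarrow> \<not> kb_same_vertex 2 1 (?p i) (?p j)"
    proof -
      fix i j :: nat assume "i < 2" "j < 2" "i \<noteq> j"
      then have "(i = 0 \<and> j = 1) \<or> (i = 1 \<and> j = 0)" by auto
      then show "\<not> kb_same_vertex 2 1 (?p i) (?p j)" using k0 k1 sv_iff_kc[of 1 2] by auto
    qed
    show "\<And>q. \<exists>i<2. kb_same_vertex 2 1 q (?p i)"
    proof -
      fix q
      have "kc 2 1 q \<in> {0..<2} \<times> {0..<1}" by (rule kc_range) simp_all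
      then have "kc 2 1 q = (0, 0) \<or> kc 2 1 q = (1, 0)" by auto
      then have "kc 2 1 q = kc 2 1 (?p 0) \<or> kc 2 1 q = kc 2 1 (?p 1)" using k0 k1 by auto
      moreover have "kb_same_vertex 2 1 q (?p i) = (kc 2 1 q = kc 2 1 (?p i))" for i
        using sv_iff_kc[of 1 2] by simp
      ultimately have "kb_same_vertex 2 1 q (?p 0) \<or> kb_same_vertex 2 1 q (?p 1)" by blast
      then show "\<exists>i<2. kb_same_vertex 2 1 q (?p i)"
      proof
        assume "kb_same_vertex 2 1 q (?p 0)" then show ?thesis by (intro exI[of _ 0]) simp
      next
        assume "kb_same_vertex 2 1 q (?p 1)" then show ?thesis by (intro exI[of _ 1]) simp
      qed
    qed
    show "\<And>i j. i < 2 \<Longrightarrow> j < 2 \<Longrightarrow> i \<noteq> j \<Longrightarrow> \<not> kb_same_edge 2 1 (?p i, ?p (Suc i)) (?p j, ?p (Suc j))"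
    proof -
      fix i j :: nat assume "i < 2" "j < 2" "i \<noteq> j"
      then have "(i = 0 \<and> j = 1) \<or> (i = 1 \<and> j = 0)" by auto
      then show "\<not> kb_same_edge 2 1 (?p i, ?p (Suc i)) (?p j, ?p (Suc j))"
        using T21_no_edge by (auto simp: wl_def B21_def)
    qed
    show "?p 2 = (2, 0) \<or> ?p 2 = (- 2, 0)" by (simp add: wl_def B21_def)
  qed
  then show ?thesis by blast
qed


theorem theorem6p2:
  fixes m n :: int
  assumes "0 < m" and "0 < n" and "1 < m \<or> 1 < n"
  shows "(\<exists>p N. kb_cylindrical_tour m n p N) \<longleftrightarrow>
           \<not> (m = 2 \<and> n = 2) \<and> \<not> (odd m \<and> even n)"
proof
  assume "\<exists>p N. kb_cylindrical_tour m n p N"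
  then obtain p N where t: "kb_cylindrical_tour m n p N" by blast
  have "\<not> (m = 2 \<and> n = 2)"
  proof
    assume "m = 2 \<and> n = 2"
    then show False using t nec_22 by auto
  qed
  moreover have "\<not> (odd m \<and> even n)" using nec_parity[OF assms(1,2) t] by auto
  ultimately show "\<not> (m = 2 \<and> n = 2) \<and> \<not> (odd m \<and> even n)" by blast
next
  assume R: "\<not> (m = 2 \<and> n = 2) \<and> \<not> (odd m \<and> even n)"
  have m0: "0 < m" and n0: "0 < n" using assms by auto
  show "\<exists>p N. kb_cylindrical_tour m n p N"
  proof (cases "odd n")
    case True
    show ?thesis
    proof (cases "n = 1")
      case False
      define k where "k = nat ((n - 1) div 2)"
      have nk: "2 * int k + 1 = n" using True n0 unfolding k_def by (auto elim!: oddE)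
      have k1: "1 \<le> k" using True n0 False unfolding k_def by (auto elim!: oddE)
      show ?thesis using F1_tour[OF m0 k1] nk by simp
    next
      case n1: True
      then have m2: "2 \<le> m" using assms by auto
      show ?thesis
      proof (cases "even m")
        case True
        show ?thesis
        proof (cases "m = 2")
          case True then show ?thesis using T21_tour n1 by simp
        next
          case False
          define K where "K = nat (m div 2)"
          have mK: "int K * 2 = m" using \<open>even m\<close> m0 unfolding K_def by (auto elim!: evenE)
          have K2: "2 \<le> K" using \<open>even m\<close> m2 False unfolding K_def by (auto elim!: evenE)
          show ?thesis using B21_tour[OF K2] mK n1 by simp
        qed
      next
        case False
        then have "m = 3 \<or> m = 5 \<or> 7 \<le> m" using m2 by presburger
        then show ?thesis
        proof (elim disjE)
          assume "m = 3" then show ?thesis using T31_tour n1 by simp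
        next
          assume "m = 5" then show ?thesis using T51_tour n1 by simp
        next
          assume "7 \<le> m" then show ?thesis using F4_tour[of m] False n1 by simp
        qed
      qed
    qed
  next
    case False
    then have en: "even n" by simp
    then have em: "even m" using R by blast
    define K where "K = nat (m div 2)"
    have mK: "int K * 2 = m" using em m0 unfolding K_def by (auto elim!: evenE)
    have K1: "0 < K" using em m0 unfolding K_def by (auto elim!: evenE)
    show ?thesis
    proof (cases "n = 2")
      case False
      then have n4: "3 \<le> nat n" using en n0 by (auto elim!: evenE)
      show ?thesis using F2_tour[OF K1 n4] mK n0 by simp
    next
      case n2: True
      then have "m \<noteq> 2" using R by blast
      then have m4: "4 \<le> m" using em m0 by (auto elim!: evenE)
      show ?thesis
      proof (cases "m mod 4 = 0")
        case True
        define K4 where "K4 = nat (m div 4)"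
        have mK4: "int K4 * 4 = m" using True m0 unfolding K4_def by auto
        have "1 \<le> K4" using m4 unfolding K4_def by auto
        then show ?thesis using B42_tour mK4 n2 by metis
      next
        case False
        then have m42: "m mod 4 = 2" using em by presburger
        define k where "k = nat ((m - 6) div 4)"
        have m6: "6 \<le> m" using m42 m4 by presburger
        then have "int k = (m - 6) div 4" unfolding k_def by simp
        moreover have "m = 6 + 4 * ((m - 6) div 4)" using m42 m6 by presburger
        ultimately have "m = 6 + 4 * int k" by simp
        then show ?thesis using F5_tour n2 by metis
      qed
    qed
  qed
qed


end
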